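(* Let $\mathcal{S}$ be a sound saturation system and let $\mathcal{C}$ be one of the clause sets $\mathcal{X}_m$ or $\mathcal{Y}_{m,n}$ with natural numbers $0<n<m$. Then $\mathcal{S}+\mathrm{IND}^R_{\mathrm{PF}}(\mathrm{Open}(L(\mathcal{C})))$ does not refute $\mathcal{C}$.
   Context: Language of linear arithmetic $\{0/0,s/1,p/1,+/2\}$. $\mathcal{T}$ has axioms (universally closed) $0\neq s(x)$, $p(0)=0$, $p(s(x))=x$, $x+0=x$, $x+s(y)=s(x+y)$; $\mathcal{T}'$ is $\mathcal{T}$ plus $x\neq0\to x=s(p(x))$, $x+y=y+x$, $(x+y)+z=x+(y+z)$, $x+y=x+z\to y=z$. For $m\in\mathbb{N}$ and a term $t$, $m\cdot t$ is $t+(t+\cdots+(t+t)\cdots)$ ($m$ copies) and $s^n$ is $n$-fold $s$. $C_m=\forall x,y(m\cdot x=m\cdot y\to x=y)$, $D_{m,n}=\forall x,y\,(s^n(m\cdot x)\neq m\cdot y)$. $\mathcal{X}_m=\mathit{CNF}(\mathit{sk}^\exists(\mathcal{T}'+\neg C_m))$, $\mathcal{Y}_{m,n}=\mathit{CNF}(\mathit{sk}^\exists(\mathcal{T}'+\neg D_{m,n}))$, where $\mathit{sk}^\exists$ is existential Skolemization with canonical Skolem symbols (a strong quantifier $QxA$ with free variables $\vec y$ is replaced by $\mathfrak{s}_{QxA}(\vec y)$, a new function symbol indexed by $QxA$; here only new constants arise) and $\mathit{CNF}$ gives clause sets of conjunctive normal forms. $L(\mathcal{C})$ = symbols occurring in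 $\mathcal{C}$; $\mathrm{Open}(L)$ = quantifier-free $L$ formulas. $I_x\varphi=\forall\vec z(\varphi(0,\vec z)\wedge\forall x(\varphi(x,\vec z)\to\varphi(s(x),\vec z))\to\forall x\varphi(x,\vec z))$. Saturation systems: sets of rules $\mathcal{C}/\mathcal{D}$ ($\mathcal{C}$ clause set, $\mathcal{D}$ finite clause set), $+$ = union; a deduction from $\mathcal{C}_0$ is $\mathcal{D}_0=\mathcal{C}_0,\dots,\mathcal{D}_k$ with $\mathcal{D}_{i+1}=\mathcal{D}_i\cup\mathcal{B}_i$ for a rule $\mathcal{D}_i/\mathcal{B}_i$; a refutation has the empty clause in $\mathcal{D}_k$. Sound: any clause $C$ derivable from $\mathcal{C}_0$ has $L(C)\subseteq L(\mathcal{C}_0)$ and $\mathcal{C}_0\models C$. $\mathrm{IND}^R_{\mathrm{PF}}(\Gamma)$ is the set of rules $\mathcal{C}'/\mathit{CNF}(\mathit{sk}^\exists(I_x\varphi(x,\vec t)))$ for every clause set $\mathcal{C}'$, every $\varphi(x,\vec z)\in\Gamma$ and every vector $\vec t$ of ground $L(\mathcal{C}')$ terms. *)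

theory Defs
  imports Main "HOL-Library.FSet"
begin

datatype 'f trm = Var nat | Fn 'f "'f trm list"

datatype 'f fm =
    Bot
  | Eq "'f trm" "'f trm"
  | Rel string "'f trm list"
  | Neg "'f fm"
  | Conj "'f fm" "'f fm"
  | Disj "'f fm" "'f fm"
  | Imp "'f fm" "'f fm"
  | All nat "'f fm"
  | Ex nat "'f fm"

text \<open>Function symbols: named symbols and canonical Skolem symbols indexed by
  the quantified formula QxA they replace.\<close>
datatype sym = Named string | Sk "sym fm"

datatype 'f atom = Equ "'f trm" "'f trm" | Pred string "'f trm list"
datatype 'f lit = Pos "'f atom" | NegL "'f atom"

type_synonym clause = "sym lit fset"

text \<open>Non-logical symbols of a language (equality is logical).\<close>
datatype lsym = FS sym | PS string

primrec tvars :: "'f trm \<Rightarrow> nat set" where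
  "tvars (Var x) = {x}"
| "tvars (Fn f ts) = \<Union> (set (map tvars ts))"

primrec tsyms :: "'f trm \<Rightarrow> 'f set" where
  "tsyms (Var x) = {}"
| "tsyms (Fn f ts) = insert f (\<Union> (set (map tsyms ts)))"

primrec tsubst :: "(nat \<Rightarrow> 'f trm) \<Rightarrow> 'f trm \<Rightarrow> 'f trm" where
  "tsubst \<sigma> (Var x) = \<sigma> x"
| "tsubst \<sigma> (Fn f ts) = Fn f (map (tsubst \<sigma>) ts)"

primrec fv :: "'f fm \<Rightarrow> nat set" where
  "fv Bot = {}"
| "fv (Eq s t) = tvars s \<union> tvars t"
| "fv (Rel r ts) = \<Union> (set (map tvars ts))"
| "fv (Neg A) = fv A"
| "fv (Conj A B) = fv A \<union> fv B"
| "fv (Disj A B) = fv A \<union> fv B"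
| "fv (Imp A B) = fv A \<union> fv B"
| "fv (All x A) = fv A - {x}"
| "fv (Ex x A) = fv A - {x}"

primrec qfree :: "'f fm \<Rightarrow> bool" where
  "qfree Bot = True"
| "qfree (Eq s t) = True"
| "qfree (Rel r ts) = True"
| "qfree (Neg A) = qfree A"
| "qfree (Conj A B) = (qfree A \<and> qfree B)"
| "qfree (Disj A B) = (qfree A \<and> qfree B)"
| "qfree (Imp A B) = (qfree A \<and> qfree B)"
| "qfree (All x A) = False"
| "qfree (Ex x A) = False"

primrec fsyms :: "sym fm \<Rightarrow> lsym set" where
  "fsyms Bot = {}"
| "fsyms (Eq s t) = FS ` (tsyms s \<union> tsyms t)"
| "fsyms (Rel r ts) = insert (PS r) (FS ` \<Union> (set (map tsyms ts)))"
| "fsyms (Neg A) = fsyms A"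
| "fsyms (Conj A B) = fsyms A \<union> fsyms B"
| "fsyms (Disj A B) = fsyms A \<union> fsyms B"
| "fsyms (Imp A B) = fsyms A \<union> fsyms B"
| "fsyms (All x A) = fsyms A"
| "fsyms (Ex x A) = fsyms A"

definition svars :: "(nat \<Rightarrow> 'f trm) \<Rightarrow> nat set \<Rightarrow> nat set" where
  "svars \<sigma> V = (\<Union>v\<in>V. tvars (\<sigma> v))"

definition bvar :: "(nat \<Rightarrow> 'f trm) \<Rightarrow> nat \<Rightarrow> 'f fm \<Rightarrow> nat" where
  "bvar \<sigma> x A = (let V = svars \<sigma> (fv A - {x}) in
      if x \<in> V then Suc (Max (insert x V)) else x)"

primrec fsubst :: "(nat \<Rightarrow> 'f trm) \<Rightarrow> 'f fm \<Rightarrow> 'f fm" where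
  "fsubst \<sigma> Bot = Bot"
| "fsubst \<sigma> (Eq s t) = Eq (tsubst \<sigma> s) (tsubst \<sigma> t)"
| "fsubst \<sigma> (Rel r ts) = Rel r (map (tsubst \<sigma>) ts)"
| "fsubst \<sigma> (Neg A) = Neg (fsubst \<sigma> A)"
| "fsubst \<sigma> (Conj A B) = Conj (fsubst \<sigma> A) (fsubst \<sigma> B)"
| "fsubst \<sigma> (Disj A B) = Disj (fsubst \<sigma> A) (fsubst \<sigma> B)"
| "fsubst \<sigma> (Imp A B) = Imp (fsubst \<sigma> A) (fsubst \<sigma> B)"
| "fsubst \<sigma> (All x A) = All (bvar \<sigma> x A) (fsubst (\<sigma>(x := Var (bvar \<sigma> x A))) A)"
| "fsubst \<sigma> (Ex x A) = Ex (bvar \<sigma> x A) (fsubst (\<sigma>(x := Var (bvar \<sigma> x A))) A)"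

definition skt :: "(nat \<Rightarrow> sym trm) \<Rightarrow> sym fm \<Rightarrow> sym trm" where
  "skt \<sigma> Q = Fn (Sk (fsubst \<sigma> Q)) (map Var (sorted_list_of_set (fv (fsubst \<sigma> Q))))"

text \<open>sk p sigma A: p = True means A occurs positively (as an assumption of
  the refutation); strong quantifiers are positive \<exists> and negative \<forall>.\<close>
primrec sk :: "bool \<Rightarrow> (nat \<Rightarrow> sym trm) \<Rightarrow> sym fm \<Rightarrow> sym fm" where
  "sk p \<sigma> Bot = Bot"
| "sk p \<sigma> (Eq s t) = Eq (tsubst \<sigma> s) (tsubst \<sigma> t)"
| "sk p \<sigma> (Rel r ts) = Rel r (map (tsubst \<sigma>) ts)"
| "sk p \<sigma> (Neg A) = Neg (sk (\<not> p) \<sigma> A)"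
| "sk p \<sigma> (Conj A B) = Conj (sk p \<sigma> A) (sk p \<sigma> B)"
| "sk p \<sigma> (Disj A B) = Disj (sk p \<sigma> A) (sk p \<sigma> B)"
| "sk p \<sigma> (Imp A B) = Imp (sk (\<not> p) \<sigma> A) (sk p \<sigma> B)"
| "sk p \<sigma> (All x A) = (if p
      then All (bvar \<sigma> x A) (sk p (\<sigma>(x := Var (bvar \<sigma> x A))) A)
      else sk p (\<sigma>(x := skt \<sigma> (All x A))) A)"
| "sk p \<sigma> (Ex x A) = (if p
      then sk p (\<sigma>(x := skt \<sigma> (Ex x A))) A
      else Ex (bvar \<sigma> x A) (sk p (\<sigma>(x := Var (bvar \<sigma> x A))) A))"

definition skE :: "sym fm \<Rightarrow> sym fm" where
  "skE A = sk True Var A"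

definition dist :: "'f lit fset set \<Rightarrow> 'f lit fset set \<Rightarrow> 'f lit fset set" where
  "dist S T = {c |\<union>| d | c d. c \<in> S \<and> d \<in> T}"

text \<open>Clause form of a formula without strong quantifiers: the (weak) quantifier at
  tree position k gets the variable k (so bound variables are renamed apart and then
  dropped), and the matrix is brought into CNF by distributivity.\<close>
primrec cls :: "bool \<Rightarrow> (nat \<Rightarrow> 'f trm) \<Rightarrow> nat \<Rightarrow> 'f fm \<Rightarrow> 'f lit fset set" where
  "cls p \<sigma> k Bot = (if p then {{||}} else {})"
| "cls p \<sigma> k (Eq s t) =
     {{|(if p then Pos else NegL) (Equ (tsubst \<sigma> s) (tsubst \<sigma> t))|}}"
| "cls p \<sigma> k (Rel r ts) =
     {{|(if p then Pos else NegL) (Pred r (map (tsubst \<sigma>) ts))|}}"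
| "cls p \<sigma> k (Neg A) = cls (\<not> p) \<sigma> (2*k+1) A"
| "cls p \<sigma> k (Conj A B) = (if p then cls p \<sigma> (2*k+1) A \<union> cls p \<sigma> (2*k+2) B
      else dist (cls p \<sigma> (2*k+1) A) (cls p \<sigma> (2*k+2) B))"
| "cls p \<sigma> k (Disj A B) = (if p then dist (cls p \<sigma> (2*k+1) A) (cls p \<sigma> (2*k+2) B)
      else cls p \<sigma> (2*k+1) A \<union> cls p \<sigma> (2*k+2) B)"
| "cls p \<sigma> k (Imp A B) = (if p then dist (cls False \<sigma> (2*k+1) A) (cls True \<sigma> (2*k+2) B)
      else cls True \<sigma> (2*k+1) A \<union> cls False \<sigma> (2*k+2) B)"
| "cls p \<sigma> k (All x A) = cls p (\<sigma>(x := Var k)) (2*k+1) A"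
| "cls p \<sigma> k (Ex x A) = cls p (\<sigma>(x := Var k)) (2*k+1) A"

definition CNF :: "'f fm \<Rightarrow> 'f lit fset set" where
  "CNF A = cls True Var 0 A"

definition CNFsk :: "sym fm set \<Rightarrow> clause set" where
  "CNFsk \<Phi> = (\<Union>A\<in>\<Phi>. CNF (skE A))"

primrec asyms :: "sym atom \<Rightarrow> lsym set" where
  "asyms (Equ s t) = FS ` (tsyms s \<union> tsyms t)"
| "asyms (Pred r ts) = insert (PS r) (FS ` \<Union> (set (map tsyms ts)))"

primrec lsyms :: "sym lit \<Rightarrow> lsym set" where
  "lsyms (Pos a) = asyms a"
| "lsyms (NegL a) = asyms a"

definition Lc :: "clause \<Rightarrow> lsym set" where
  "Lc C = (\<Union>l\<in>fset C. lsyms l)"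

definition L :: "clause set \<Rightarrow> lsym set" where
  "L \<C> = (\<Union>C\<in>\<C>. Lc C)"

definition Open :: "lsym set \<Rightarrow> sym fm set" where
  "Open \<L> = {\<phi>. qfree \<phi> \<and> fsyms \<phi> \<subseteq> \<L>}"

definition ground_term_of :: "lsym set \<Rightarrow> sym trm \<Rightarrow> bool" where
  "ground_term_of \<L> t \<longleftrightarrow> tvars t = {} \<and> FS ` tsyms t \<subseteq> \<L>"

text \<open>Structures with domain a nonempty set of natural numbers (for the countable
  languages at hand this yields the same consequence relation, by Loewenheim-Skolem).\<close>
definition is_struct :: "nat set \<Rightarrow> (sym \<Rightarrow> nat list \<Rightarrow> nat) \<Rightarrow> bool" where
  "is_struct D F \<longleftrightarrow> D \<noteq> {} \<and> (\<forall>f xs. set xs \<subseteq> D \<longrightarrow> F f xs \<in> D)"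

primrec teval :: "(sym \<Rightarrow> nat list \<Rightarrow> nat) \<Rightarrow> (nat \<Rightarrow> nat) \<Rightarrow> sym trm \<Rightarrow> nat" where
  "teval F \<beta> (Var x) = \<beta> x"
| "teval F \<beta> (Fn f ts) = F f (map (teval F \<beta>) ts)"

primrec aeval :: "(sym \<Rightarrow> nat list \<Rightarrow> nat) \<Rightarrow> (string \<Rightarrow> nat list \<Rightarrow> bool) \<Rightarrow> (nat \<Rightarrow> nat)
    \<Rightarrow> sym atom \<Rightarrow> bool" where
  "aeval F P \<beta> (Equ s t) = (teval F \<beta> s = teval F \<beta> t)"
| "aeval F P \<beta> (Pred r ts) = P r (map (teval F \<beta>) ts)"

primrec leval :: "(sym \<Rightarrow> nat list \<Rightarrow> nat) \<Rightarrow> (string \<Rightarrow> nat list \<Rightarrow> bool) \<Rightarrow> (nat \<Rightarrow> nat)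
    \<Rightarrow> sym lit \<Rightarrow> bool" where
  "leval F P \<beta> (Pos a) = aeval F P \<beta> a"
| "leval F P \<beta> (NegL a) = (\<not> aeval F P \<beta> a)"

definition csat :: "nat set \<Rightarrow> (sym \<Rightarrow> nat list \<Rightarrow> nat) \<Rightarrow> (string \<Rightarrow> nat list \<Rightarrow> bool)
    \<Rightarrow> clause \<Rightarrow> bool" where
  "csat D F P C \<longleftrightarrow> (\<forall>\<beta>. range \<beta> \<subseteq> D \<longrightarrow> (\<exists>l\<in>fset C. leval F P \<beta> l))"

definition entails :: "clause set \<Rightarrow> clause \<Rightarrow> bool" where
  "entails \<C> C \<longleftrightarrow> (\<forall>D F P. is_struct D F \<longrightarrow> (\<forall>C'\<in>\<C>. csat D F P C') \<longrightarrow> csat D F P C)"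

type_synonym rule = "clause set \<times> clause set"

definition saturation_system :: "rule set \<Rightarrow> bool" where
  "saturation_system \<S> \<longleftrightarrow> (\<forall>(\<C>, \<D>)\<in>\<S>. finite \<D>)"

definition deduction :: "rule set \<Rightarrow> clause set \<Rightarrow> clause set list \<Rightarrow> bool" where
  "deduction \<S> \<C>0 Ds \<longleftrightarrow> Ds \<noteq> [] \<and> hd Ds = \<C>0 \<and>
     (\<forall>i. Suc i < length Ds \<longrightarrow> (\<exists>B. (Ds ! i, B) \<in> \<S> \<and> Ds ! Suc i = Ds ! i \<union> B))"

definition derivable :: "rule set \<Rightarrow> clause set \<Rightarrow> clause \<Rightarrow> bool" where
  "derivable \<S> \<C>0 C \<longleftrightarrow> (\<exists>Ds. deduction \<S> \<C>0 Ds \<and> C \<in> last Ds)"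

definition refutes :: "rule set \<Rightarrow> clause set \<Rightarrow> bool" where
  "refutes \<S> \<C>0 \<longleftrightarrow> derivable \<S> \<C>0 {||}"

definition sound :: "rule set \<Rightarrow> bool" where
  "sound \<S> \<longleftrightarrow> (\<forall>\<C>0 C. derivable \<S> \<C>0 C \<longrightarrow> Lc C \<subseteq> L \<C>0 \<and> entails \<C>0 C)"

definition zero :: "sym trm" where "zero = Fn (Named ''0'') []"
definition suc :: "sym trm \<Rightarrow> sym trm" where "suc t = Fn (Named ''s'') [t]"
definition pre :: "sym trm \<Rightarrow> sym trm" where "pre t = Fn (Named ''p'') [t]"
definition plus :: "sym trm \<Rightarrow> sym trm \<Rightarrow> sym trm" where "plus t u = Fn (Named ''+'') [t, u]"

fun mul :: "nat \<Rightarrow> sym trm \<Rightarrow> sym trm" where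
  "mul 0 t = zero"
| "mul (Suc 0) t = t"
| "mul (Suc (Suc k)) t = plus t (mul (Suc k) t)"

definition sucs :: "nat \<Rightarrow> sym trm \<Rightarrow> sym trm" where
  "sucs n t = (suc ^^ n) t"

abbreviation "vx \<equiv> Var 0 :: sym trm"
abbreviation "vy \<equiv> Var 1 :: sym trm"
abbreviation "vz \<equiv> Var 2 :: sym trm"

definition T_axioms :: "sym fm set" where
  "T_axioms = {
     All 0 (Neg (Eq zero (suc vx))),
     Eq (pre zero) zero,
     All 0 (Eq (pre (suc vx)) vx),
     All 0 (Eq (plus vx zero) vx),
     All 0 (All 1 (Eq (plus vx (suc vy)) (suc (plus vx vy))))}"

definition T'_axioms :: "sym fm set" where
  "T'_axioms = T_axioms \<union> {
     All 0 (Imp (Neg (Eq vx zero)) (Eq vx (suc (pre vx)))),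
     All 0 (All 1 (Eq (plus vx vy) (plus vy vx))),
     All 0 (All 1 (All 2 (Eq (plus (plus vx vy) vz) (plus vx (plus vy vz))))),
     All 0 (All 1 (All 2 (Imp (Eq (plus vx vy) (plus vx vz)) (Eq vy vz))))}"

definition C_fm :: "nat \<Rightarrow> sym fm" where
  "C_fm m = All 0 (All 1 (Imp (Eq (mul m vx) (mul m vy)) (Eq vx vy)))"

definition D_fm :: "nat \<Rightarrow> nat \<Rightarrow> sym fm" where
  "D_fm m n = All 0 (All 1 (Neg (Eq (sucs n (mul m vx)) (mul m vy))))"

definition X :: "nat \<Rightarrow> clause set" where
  "X m = CNFsk (T'_axioms \<union> {Neg (C_fm m)})"

definition Y :: "nat \<Rightarrow> nat \<Rightarrow> clause set" where
  "Y m n = CNFsk (T'_axioms \<union> {Neg (D_fm m n)})"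

text \<open>I_x\<phi>(x, t): here \<sigma> assigns the ground terms t to the parameters z of \<phi>.\<close>
definition ind_fm :: "nat \<Rightarrow> sym fm \<Rightarrow> (nat \<Rightarrow> sym trm) \<Rightarrow> sym fm" where
  "ind_fm x \<phi> \<sigma> =
     Imp (Conj (fsubst (\<sigma>(x := zero)) \<phi>)
               (All x (Imp (fsubst (\<sigma>(x := Var x)) \<phi>) (fsubst (\<sigma>(x := suc (Var x))) \<phi>))))
         (All x (fsubst (\<sigma>(x := Var x)) \<phi>))"

definition IND_PF :: "sym fm set \<Rightarrow> rule set" where
  "IND_PF \<Gamma> = {(\<C>', CNF (skE (ind_fm x \<phi> \<sigma>))) | \<C>' x \<phi> \<sigma>.
      \<phi> \<in> \<Gamma> \<and> (\<forall>z\<in>fv \<phi> - {x}. ground_term_of (L \<C>') (\<sigma> z))}"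

end

theory Submission
  imports Defs "HOL-Library.Countable_Set"
begin

primrec holds :: "(sym \<Rightarrow> nat list \<Rightarrow> nat) \<Rightarrow> (string \<Rightarrow> nat list \<Rightarrow> bool) \<Rightarrow> (nat \<Rightarrow> nat) \<Rightarrow> sym fm \<Rightarrow> bool" where
  "holds F P \<rho> Bot = False"
| "holds F P \<rho> (Eq s t) = (teval F \<rho> s = teval F \<rho> t)"
| "holds F P \<rho> (Rel r ts) = P r (map (teval F \<rho>) ts)"
| "holds F P \<rho> (Neg A) = (\<not> holds F P \<rho> A)"
| "holds F P \<rho> (Conj A B) = (holds F P \<rho> A \<and> holds F P \<rho> B)"
| "holds F P \<rho> (Disj A B) = (holds F P \<rho> A \<or> holds F P \<rho> B)"
| "holds F P \<rho> (Imp A B) = (holds F P \<rho> A \<longrightarrow> holds F P \<rho> B)"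
| "holds F P \<rho> (All x A) = (\<forall>v. holds F P (\<rho>(x := v)) A)"
| "holds F P \<rho> (Ex x A) = (\<exists>v. holds F P (\<rho>(x := v)) A)"

lemma teval_tsubst: "teval F \<rho> (tsubst \<sigma> t) = teval F (\<lambda>y. teval F \<rho> (\<sigma> y)) t"
  by (induction t) (simp_all add: comp_def cong: map_cong)

lemma teval_cong: "(\<And>y. y \<in> tvars t \<Longrightarrow> \<rho> y = \<rho>' y) \<Longrightarrow> teval F \<rho> t = teval F \<rho>' t"
proof (induction t)
  case (Fn f ts)
  have "map (teval F \<rho>) ts = map (teval F \<rho>') ts"
    using Fn by (intro map_cong) auto
  then show ?case by (simp only: teval.simps)
qed simp

lemma teval_Fcong: "(\<And>g. g \<in> tsyms t \<Longrightarrow> F g = G g) \<Longrightarrow> teval F \<rho> t = teval G \<rho> t"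
proof (induction t)
  case (Fn f ts)
  have "map (teval F \<rho>) ts = map (teval G \<rho>) ts"
    using Fn by (intro map_cong) auto
  then show ?case using Fn.prems by (simp only: teval.simps) simp
qed simp

lemma teval_ground: "tvars t = {} \<Longrightarrow> teval F \<rho> t = teval F \<rho>' t"
  by (rule teval_cong) auto

lemma holds_cong: "(\<And>y. y \<in> fv A \<Longrightarrow> \<rho> y = \<rho>' y) \<Longrightarrow> holds F P \<rho> A = holds F P \<rho>' A"
proof (induction A arbitrary: \<rho> \<rho>')
  case (Eq s t)
  have "teval F \<rho> s = teval F \<rho>' s" by (rule teval_cong) (simp add: Eq)
  moreover have "teval F \<rho> t = teval F \<rho>' t" by (rule teval_cong) (simp add: Eq)
  ultimately show ?case by simp
next
  case (Rel r ts)
  have "map (teval F \<rho>) ts = map (teval F \<rho>') ts"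
  proof (rule map_cong[OF refl])
    fix u assume u: "u \<in> set ts"
    show "teval F \<rho> u = teval F \<rho>' u" by (rule teval_cong) (use Rel u in force)
  qed
  then show ?case by (simp only: holds.simps)
next
  case (All x A)
  have "\<And>v. holds F P (\<rho>(x:=v)) A = holds F P (\<rho>'(x:=v)) A"
    by (rule All.IH) (use All.prems in auto)
  then show ?case by simp
next
  case (Ex x A)
  have "\<And>v. holds F P (\<rho>(x:=v)) A = holds F P (\<rho>'(x:=v)) A"
    by (rule Ex.IH) (use Ex.prems in auto)
  then show ?case by simp
next
  case (Neg A)
  have "holds F P \<rho> A = holds F P \<rho>' A" by (rule Neg.IH) (use Neg.prems in auto)
  then show ?case by simp
next
  case (Conj A B)
  have "holds F P \<rho> A = holds F P \<rho>' A" by (rule Conj.IH) (use Conj.prems in auto)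
  moreover have "holds F P \<rho> B = holds F P \<rho>' B" by (rule Conj.IH) (use Conj.prems in auto)
  ultimately show ?case by simp
next
  case (Disj A B)
  have "holds F P \<rho> A = holds F P \<rho>' A" by (rule Disj.IH) (use Disj.prems in auto)
  moreover have "holds F P \<rho> B = holds F P \<rho>' B" by (rule Disj.IH) (use Disj.prems in auto)
  ultimately show ?case by simp
next
  case (Imp A B)
  have "holds F P \<rho> A = holds F P \<rho>' A" by (rule Imp.IH) (use Imp.prems in auto)
  moreover have "holds F P \<rho> B = holds F P \<rho>' B" by (rule Imp.IH) (use Imp.prems in auto)
  ultimately show ?case by simp
qed simp

lemma holds_Fcong: "(\<And>g. FS g \<in> fsyms A \<Longrightarrow> F g = G g) \<Longrightarrow> holds F P \<rho> A = holds G P \<rho> A"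
proof (induction A arbitrary: \<rho>)
  case (Eq s t)
  have "teval F \<rho> s = teval G \<rho> s" by (rule teval_Fcong) (simp add: Eq)
  moreover have "teval F \<rho> t = teval G \<rho> t" by (rule teval_Fcong) (simp add: Eq)
  ultimately show ?case by simp
next
  case (Rel r ts)
  have "map (teval F \<rho>) ts = map (teval G \<rho>) ts"
  proof (rule map_cong[OF refl])
    fix u assume u: "u \<in> set ts"
    show "teval F \<rho> u = teval G \<rho> u" by (rule teval_Fcong) (use Rel u in force)
  qed
  then show ?case by (simp only: holds.simps)
qed simp_all

lemma finite_tvars: "finite (tvars t)"
  by (induction t) auto

lemma finite_fv: "finite (fv A)"
  by (induction A) (auto simp: finite_tvars)

lemma finite_svars: "finite V \<Longrightarrow> finite (svars \<sigma> V)"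
  by (auto simp: svars_def finite_tvars)

lemma bvar_fresh: "bvar \<sigma> x A \<notin> svars \<sigma> (fv A - {x})"
proof -
  let ?V = "svars \<sigma> (fv A - {x})"
  have fin: "finite ?V" by (simp add: finite_svars finite_fv)
  show ?thesis
  proof (cases "x \<in> ?V")
    case True
    have "Suc (Max (insert x ?V)) \<notin> ?V"
      using fin Max_ge[of "insert x ?V"] by (metis Suc_n_not_le_n finite_insert insertCI)
    then show ?thesis using True by (simp add: bvar_def Let_def)
  next
    case False then show ?thesis by (simp add: bvar_def Let_def)
  qed
qed

lemma key_upd:
  assumes "b = bvar \<sigma> x A"
  shows "holds F P (\<lambda>y. teval F (\<rho>(b := v)) ((\<sigma>(x := Var b)) y)) A
       = holds F P ((\<lambda>y. teval F \<rho> (\<sigma> y))(x := v)) A"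
proof (rule holds_cong)
  fix y assume y: "y \<in> fv A"
  show "teval F (\<rho>(b := v)) ((\<sigma>(x := Var b)) y) = ((\<lambda>y. teval F \<rho> (\<sigma> y))(x := v)) y"
  proof (cases "y = x")
    case True then show ?thesis by simp
  next
    case False
    then have "b \<notin> tvars (\<sigma> y)" using bvar_fresh[of \<sigma> x A] y assms by (auto simp: svars_def)
    then have "teval F (\<rho>(b := v)) (\<sigma> y) = teval F \<rho> (\<sigma> y)"
      by (intro teval_cong) auto
    then show ?thesis using False by simp
  qed
qed

lemma holds_fsubst: "holds F P \<rho> (fsubst \<sigma> A) = holds F P (\<lambda>y. teval F \<rho> (\<sigma> y)) A"
proof (induction A arbitrary: \<sigma> \<rho>)
  case (Eq s t) then show ?case by (simp add: teval_tsubst)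
next
  case (Rel r ts) then show ?case by (simp add: teval_tsubst comp_def)
next
  case (All x A) show ?case by (simp only: fsubst.simps holds.simps All.IH key_upd[OF refl])
next
  case (Ex x A) show ?case by (simp only: fsubst.simps holds.simps Ex.IH key_upd[OF refl])
qed auto

lemma tvars_tsubst: "tvars (tsubst \<sigma> t) = svars \<sigma> (tvars t)"
  by (induction t) (auto simp: svars_def)

lemma svars_Un: "svars \<sigma> (A \<union> B) = svars \<sigma> A \<union> svars \<sigma> B"
  by (auto simp: svars_def)

lemma fv_fsubst: "fv (fsubst \<sigma> A) = svars \<sigma> (fv A)"
proof (induction A arbitrary: \<sigma>)
  case (Eq s t) then show ?case by (simp add: tvars_tsubst svars_Un)
next
  case (Rel r ts) then show ?case by (auto simp: tvars_tsubst svars_def)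
next
  case (Neg A) then show ?case by simp
next
  case (Conj A B) then show ?case by (simp add: svars_Un)
next
  case (Disj A B) then show ?case by (simp add: svars_Un)
next
  case (Imp A B) then show ?case by (simp add: svars_Un)
next
  case (All x A)
  have fr: "bvar \<sigma> x A \<notin> svars \<sigma> (fv A - {x})" by (rule bvar_fresh)
  have "svars (\<sigma>(x := Var (bvar \<sigma> x A))) (fv A) - {bvar \<sigma> x A} = svars \<sigma> (fv A - {x})"
    using fr by (auto simp: svars_def split: if_splits)
  then show ?case by (simp only: fsubst.simps fv.simps All.IH)
next
  case (Ex x A)
  have fr: "bvar \<sigma> x A \<notin> svars \<sigma> (fv A - {x})" by (rule bvar_fresh)
  have "svars (\<sigma>(x := Var (bvar \<sigma> x A))) (fv A) - {bvar \<sigma> x A} = svars \<sigma> (fv A - {x})"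
    using fr by (auto simp: svars_def split: if_splits)
  then show ?case by (simp only: fsubst.simps fv.simps Ex.IH)
qed (simp add: svars_def)

lemma qfree_fsubst: "qfree A \<Longrightarrow> qfree (fsubst \<sigma> A)"
  by (induction A arbitrary: \<sigma>) auto

lemma size_tsyms: "g \<in> tsyms t \<Longrightarrow> f g \<le> size_trm f t"
proof (induction t)
  case (Fn h ts)
  then show ?case
  proof (cases "g = h")
    case False
    then obtain u where u: "u \<in> set ts" "g \<in> tsyms u" using Fn.prems by auto
    then have "f g \<le> size_trm f u" using Fn.IH by blast
    also have "\<dots> \<le> size_list (size_trm f) ts" using u(1) by (simp add: size_list_estimation')
    finally show ?thesis by simp
  qed simp
qed simp

lemma size_fsyms: "FS g \<in> fsyms A \<Longrightarrow> f g \<le> size_fm f A"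
proof (induction A)
  case (Eq s t) then show ?case using size_tsyms[of g s f] size_tsyms[of g t f] by auto
next
  case (Rel r ts)
  then obtain u where u: "u \<in> set ts" "g \<in> tsyms u" by auto
  then have "f g \<le> size_trm f u" using size_tsyms[of g u f] by blast
  also have "\<dots> \<le> size_list (size_trm f) ts" using u(1) by (simp add: size_list_estimation')
  finally show ?case by simp
qed auto

primrec ev :: "(sym \<Rightarrow> nat list \<Rightarrow> nat) \<Rightarrow> (string \<Rightarrow> nat list \<Rightarrow> bool) \<Rightarrow> bool \<Rightarrow> (nat \<Rightarrow> nat) \<Rightarrow> sym fm \<Rightarrow> bool" where
  "ev F P p \<rho> Bot = (\<not> p)"
| "ev F P p \<rho> (Eq s t) = (p = (teval F \<rho> s = teval F \<rho> t))"
| "ev F P p \<rho> (Rel r ts) = (p = P r (map (teval F \<rho>) ts))"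
| "ev F P p \<rho> (Neg A) = ev F P (\<not> p) \<rho> A"
| "ev F P p \<rho> (Conj A B) = (if p then ev F P p \<rho> A \<and> ev F P p \<rho> B else ev F P p \<rho> A \<or> ev F P p \<rho> B)"
| "ev F P p \<rho> (Disj A B) = (if p then ev F P p \<rho> A \<or> ev F P p \<rho> B else ev F P p \<rho> A \<and> ev F P p \<rho> B)"
| "ev F P p \<rho> (Imp A B) = (if p then ev F P False \<rho> A \<or> ev F P True \<rho> B else ev F P True \<rho> A \<and> ev F P False \<rho> B)"
| "ev F P p \<rho> (All x A) = (\<forall>v. ev F P p (\<rho>(x := v)) A)"
| "ev F P p \<rho> (Ex x A) = (\<forall>v. ev F P p (\<rho>(x := v)) A)"

lemma distE: "C \<in> dist S T \<Longrightarrow> (\<And>c d. C = c |\<union>| d \<Longrightarrow> c \<in> S \<Longrightarrow> d \<in> T \<Longrightarrow> R) \<Longrightarrow> R"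
  by (auto simp: dist_def)

lemma cls_sound:
  "ev F P p (\<lambda>y. teval F \<beta> (\<sigma> y)) A \<Longrightarrow> C \<in> cls p \<sigma> k A \<Longrightarrow> \<exists>l\<in>fset C. leval F P \<beta> l"
proof (induction A arbitrary: p \<sigma> k C)
  case Bot then show ?case by (cases p) simp_all
next
  case (Eq s t) then show ?case by (cases p) (simp_all add: teval_tsubst)
next
  case (Rel r ts) then show ?case by (cases p) (simp_all add: teval_tsubst comp_def)
next
  case (Neg A)
  have "C \<in> cls (\<not> p) \<sigma> (2*k+1) A" using Neg.prems(2) by simp
  moreover have "ev F P (\<not> p) (\<lambda>y. teval F \<beta> (\<sigma> y)) A" using Neg.prems(1) by simp
  ultimately show ?case using Neg.IH by blast
next
  case (Conj A B)
  let ?r = "\<lambda>y. teval F \<beta> (\<sigma> y)"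
  show ?case
  proof (cases p)
    case True
    then have "C \<in> cls p \<sigma> (2*k+1) A \<or> C \<in> cls p \<sigma> (2*k+2) B" using Conj.prems(2) by simp
    moreover have "ev F P p ?r A" "ev F P p ?r B" using Conj.prems(1) True by simp_all
    ultimately show ?thesis using Conj.IH by blast
  next
    case False
    then have "C \<in> dist (cls p \<sigma> (2*k+1) A) (cls p \<sigma> (2*k+2) B)" using Conj.prems(2) by simp
    then obtain c d where cd: "C = c |\<union>| d" "c \<in> cls p \<sigma> (2*k+1) A" "d \<in> cls p \<sigma> (2*k+2) B"
      by (rule distE)
    have "ev F P p ?r A \<or> ev F P p ?r B" using Conj.prems(1) False by simp
    then have "(\<exists>l\<in>fset c. leval F P \<beta> l) \<or> (\<exists>l\<in>fset d. leval F P \<beta> l)"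
      using Conj.IH cd(2,3) by blast
    then show ?thesis using cd(1) by auto
  qed
next
  case (Disj A B)
  let ?r = "\<lambda>y. teval F \<beta> (\<sigma> y)"
  show ?case
  proof (cases p)
    case False
    then have "C \<in> cls p \<sigma> (2*k+1) A \<or> C \<in> cls p \<sigma> (2*k+2) B" using Disj.prems(2) by simp
    moreover have "ev F P p ?r A" "ev F P p ?r B" using Disj.prems(1) False by simp_all
    ultimately show ?thesis using Disj.IH by blast
  next
    case True
    then have "C \<in> dist (cls p \<sigma> (2*k+1) A) (cls p \<sigma> (2*k+2) B)" using Disj.prems(2) by simp
    then obtain c d where cd: "C = c |\<union>| d" "c \<in> cls p \<sigma> (2*k+1) A" "d \<in> cls p \<sigma> (2*k+2) B"
      by (rule distE)
    have "ev F P p ?r A \<or> ev F P p ?r B" using Disj.prems(1) True by simp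
    then have "(\<exists>l\<in>fset c. leval F P \<beta> l) \<or> (\<exists>l\<in>fset d. leval F P \<beta> l)"
      using Disj.IH cd(2,3) by blast
    then show ?thesis using cd(1) by auto
  qed
next
  case (Imp A B)
  let ?r = "\<lambda>y. teval F \<beta> (\<sigma> y)"
  show ?case
  proof (cases p)
    case False
    then have "C \<in> cls True \<sigma> (2*k+1) A \<or> C \<in> cls False \<sigma> (2*k+2) B" using Imp.prems(2) by simp
    moreover have "ev F P True ?r A" "ev F P False ?r B" using Imp.prems(1) False by simp_all
    ultimately show ?thesis using Imp.IH by blast
  next
    case True
    then have "C \<in> dist (cls False \<sigma> (2*k+1) A) (cls True \<sigma> (2*k+2) B)" using Imp.prems(2) by simp
    then obtain c d where cd: "C = c |\<union>| d" "c \<in> cls False \<sigma> (2*k+1) A" "d \<in> cls True \<sigma> (2*k+2) B"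
      by (rule distE)
    have "ev F P False ?r A \<or> ev F P True ?r B" using Imp.prems(1) True by simp
    then have "(\<exists>l\<in>fset c. leval F P \<beta> l) \<or> (\<exists>l\<in>fset d. leval F P \<beta> l)"
      using Imp.IH cd(2,3) by blast
    then show ?thesis using cd(1) by auto
  qed
next
  case (All x A)
  have e: "(\<lambda>y. teval F \<beta> ((\<sigma>(x := Var k)) y)) = (\<lambda>y. teval F \<beta> (\<sigma> y))(x := \<beta> k)"
    by (rule ext) simp
  have "ev F P p (\<lambda>y. teval F \<beta> ((\<sigma>(x := Var k)) y)) A"
    unfolding e using All.prems(1) by (simp only: ev.simps)
  moreover have "C \<in> cls p (\<sigma>(x := Var k)) (2*k+1) A" using All.prems(2) by (simp only: cls.simps)
  ultimately show ?case using All.IH by blast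
next
  case (Ex x A)
  have e: "(\<lambda>y. teval F \<beta> ((\<sigma>(x := Var k)) y)) = (\<lambda>y. teval F \<beta> (\<sigma> y))(x := \<beta> k)"
    by (rule ext) simp
  have "ev F P p (\<lambda>y. teval F \<beta> ((\<sigma>(x := Var k)) y)) A"
    unfolding e using Ex.prems(1) by (simp only: ev.simps)
  moreover have "C \<in> cls p (\<sigma>(x := Var k)) (2*k+1) A" using Ex.prems(2) by (simp only: cls.simps)
  ultimately show ?case using Ex.IH by blast
qed

lemma CNF_sound:
  assumes "\<And>\<beta>. ev F P True \<beta> A" "C \<in> CNF A"
  shows "csat UNIV F P C"
  unfolding csat_def
proof (intro allI impI)
  fix \<beta> :: "nat \<Rightarrow> nat"
  have "ev F P True (\<lambda>y. teval F \<beta> (Var y)) A" using assms(1) by simp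
  then show "\<exists>l\<in>fset C. leval F P \<beta> l"
    using cls_sound assms(2) unfolding CNF_def by blast
qed

primrec closedsk :: "bool \<Rightarrow> (nat \<Rightarrow> sym trm) \<Rightarrow> sym fm \<Rightarrow> bool" where
  "closedsk p \<sigma> Bot = True"
| "closedsk p \<sigma> (Eq s t) = True"
| "closedsk p \<sigma> (Rel r ts) = True"
| "closedsk p \<sigma> (Neg A) = closedsk (\<not> p) \<sigma> A"
| "closedsk p \<sigma> (Conj A B) = (closedsk p \<sigma> A \<and> closedsk p \<sigma> B)"
| "closedsk p \<sigma> (Disj A B) = (closedsk p \<sigma> A \<and> closedsk p \<sigma> B)"
| "closedsk p \<sigma> (Imp A B) = (closedsk (\<not> p) \<sigma> A \<and> closedsk p \<sigma> B)"
| "closedsk p \<sigma> (All x A) = (if p then closedsk p (\<sigma>(x := Var (bvar \<sigma> x A))) A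
      else fv (fsubst \<sigma> (All x A)) = {} \<and> closedsk p (\<sigma>(x := skt \<sigma> (All x A))) A)"
| "closedsk p \<sigma> (Ex x A) = False"

lemma closedsk_qfree: "qfree A \<Longrightarrow> closedsk p \<sigma> A"
  by (induction A arbitrary: p \<sigma>) auto

definition W :: "(sym \<Rightarrow> nat list \<Rightarrow> nat) \<Rightarrow> (string \<Rightarrow> nat list \<Rightarrow> bool) \<Rightarrow> sym fm \<Rightarrow> nat" where
  "W G P Q = (case Q of All b B \<Rightarrow> (SOME v. \<not> holds G P ((\<lambda>_. 0)(b := v)) B) | _ \<Rightarrow> 0)"

definition Fst :: "(sym \<Rightarrow> nat list \<Rightarrow> nat) \<Rightarrow> (string \<Rightarrow> nat list \<Rightarrow> bool) \<Rightarrow> (sym \<Rightarrow> nat list \<Rightarrow> nat) \<Rightarrow> sym \<Rightarrow> nat list \<Rightarrow> nat" where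
  "Fst Fb P G g = (case g of Sk Q \<Rightarrow> (\<lambda>xs. W G P Q) | Named s \<Rightarrow> Fb (Named s))"

primrec Fit :: "(sym \<Rightarrow> nat list \<Rightarrow> nat) \<Rightarrow> (string \<Rightarrow> nat list \<Rightarrow> bool) \<Rightarrow> nat \<Rightarrow> sym \<Rightarrow> nat list \<Rightarrow> nat" where
  "Fit Fb P 0 = Fb"
| "Fit Fb P (Suc k) = Fst Fb P (Fit Fb P k)"

definition hull :: "(sym \<Rightarrow> nat list \<Rightarrow> nat) \<Rightarrow> (string \<Rightarrow> nat list \<Rightarrow> bool) \<Rightarrow> sym \<Rightarrow> nat list \<Rightarrow> nat" where
  "hull Fb P g = Fit Fb P (size g) g"

lemma W_cong: "(\<And>g. FS g \<in> fsyms Q \<Longrightarrow> G g = G' g) \<Longrightarrow> W G P Q = W G' P Q"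
proof (cases Q)
  case (All b B)
  assume h: "\<And>g. FS g \<in> fsyms Q \<Longrightarrow> G g = G' g"
  have "\<And>\<rho>. holds G P \<rho> B = holds G' P \<rho> B"
    by (rule holds_Fcong) (use h All in auto)
  then show ?thesis using All by (simp add: W_def)
qed (simp_all add: W_def)

lemma Fit_Named: "Fit Fb P k (Named s) = Fb (Named s)"
  by (cases k) (simp_all add: Fst_def)

lemma Fit_stab: "size g \<le> k \<Longrightarrow> Fit Fb P k g = Fit Fb P (size g) g"
proof (induction "size g" arbitrary: g k rule: less_induct)
  case less
  show ?case
  proof (cases g)
    case (Named s) then show ?thesis by (simp add: Fit_Named)
  next
    case (Sk Q)
    have sz: "size g = Suc (size_fm size Q)" using Sk by simp
    obtain k' where k: "k = Suc k'" using less.prems sz by (cases k) auto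
    have "\<And>g'. FS g' \<in> fsyms Q \<Longrightarrow> Fit Fb P k' g' = Fit Fb P (size_fm size Q) g'"
    proof -
      fix g' assume g': "FS g' \<in> fsyms Q"
      have s': "size g' \<le> size_fm size Q" using size_fsyms[OF g'] .
      have "Fit Fb P k' g' = Fit Fb P (size g') g'"
        by (rule less.hyps) (use s' sz k less.prems in auto)
      moreover have "Fit Fb P (size_fm size Q) g' = Fit Fb P (size g') g'"
        by (rule less.hyps) (use s' sz in auto)
      ultimately show "Fit Fb P k' g' = Fit Fb P (size_fm size Q) g'" by simp
    qed
    then have "W (Fit Fb P k') P Q = W (Fit Fb P (size_fm size Q)) P Q"
      by (rule W_cong)
    then show ?thesis using Sk k sz by (simp add: Fst_def)
  qed
qed

lemma hull_Named: "hull Fb P (Named s) = Fb (Named s)"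
  by (simp add: hull_def Fit_Named)

lemma hull_Sk: "hull Fb P (Sk Q) xs = W (hull Fb P) P Q"
proof -
  have "hull Fb P (Sk Q) xs = W (Fit Fb P (size_fm size Q)) P Q"
    by (simp add: hull_def Fst_def)
  also have "\<dots> = W (hull Fb P) P Q"
  proof (rule W_cong)
    fix g assume g: "FS g \<in> fsyms Q"
    have "size g \<le> size_fm size Q" using size_fsyms[OF g] .
    then show "Fit Fb P (size_fm size Q) g = hull Fb P g"
      unfolding hull_def by (rule Fit_stab)
  qed
  finally show ?thesis .
qed

lemma sk_sound:
  fixes Fb P
  defines "F \<equiv> hull Fb P"
  shows "closedsk p \<sigma> A \<Longrightarrow> holds F P (\<lambda>y. teval F \<rho> (\<sigma> y)) A = p \<Longrightarrow> ev F P p \<rho> (sk p \<sigma> A)"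
proof (induction A arbitrary: p \<sigma> \<rho>)
  case (Eq s t) then show ?case by (simp add: teval_tsubst)
next
  case (Rel r ts) then show ?case by (simp add: teval_tsubst comp_def)
next
  case (Neg A)
  have "ev F P (\<not> p) \<rho> (sk (\<not> p) \<sigma> A)"
    by (rule Neg.IH) (use Neg.prems in auto)
  then show ?case by simp
next
  case (Conj A B) then show ?case by (cases p) auto
next
  case (Disj A B) then show ?case by (cases p) auto
next
  case (Imp A B) then show ?case by (cases p) auto
next
  case (All x A)
  show ?case
  proof (cases p)
    case True
    let ?b = "bvar \<sigma> x A"
    have "ev F P p (\<rho>(?b := v)) (sk p (\<sigma>(x := Var ?b)) A)" for v
    proof (rule All.IH)
      show "closedsk p (\<sigma>(x := Var ?b)) A" using All.prems True by simp
      have "holds F P (\<lambda>y. teval F (\<rho>(?b := v)) ((\<sigma>(x := Var ?b)) y)) A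
          = holds F P ((\<lambda>y. teval F \<rho> (\<sigma> y))(x := v)) A" by (rule key_upd) simp
      then show "holds F P (\<lambda>y. teval F (\<rho>(?b := v)) ((\<sigma>(x := Var ?b)) y)) A = p"
        using All.prems True by simp
    qed
    then show ?thesis using True by simp
  next
    case False
    let ?b = "bvar \<sigma> x A"
    let ?B = "fsubst (\<sigma>(x := Var ?b)) A"
    let ?Q = "fsubst \<sigma> (All x A)"
    let ?c = "skt \<sigma> (All x A)"
    have Q: "?Q = All ?b ?B" by simp
    have fvQ: "fv ?Q = {}" using All.prems False by simp
    then have fvB: "fv ?B \<subseteq> {?b}" using Q by (metis Diff_eq_empty_iff fv.simps(8))
    have c: "teval F \<rho> ?c = W F P ?Q"
      by (simp add: skt_def F_def hull_Sk)
    let ?w = "SOME v. \<not> holds F P ((\<lambda>_. 0)(?b := v)) ?B"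
    have Wv: "W F P ?Q = ?w" by (simp add: W_def)
    have "\<not> holds F P \<rho> ?Q"
      using All.prems False by (simp only: holds_fsubst) simp
    then obtain v where "\<not> holds F P (\<rho>(?b := v)) ?B" using Q by auto
    moreover have "holds F P (\<rho>(?b := v)) ?B = holds F P ((\<lambda>_. 0)(?b := v)) ?B"
      by (rule holds_cong) (use fvB in auto)
    ultimately have "\<not> holds F P ((\<lambda>_. 0)(?b := v)) ?B" by simp
    then have "\<not> holds F P ((\<lambda>_. 0)(?b := ?w)) ?B" by (rule someI)
    moreover obtain w where wdef: "w = ?w" by simp
    ultimately have w0: "\<not> holds F P ((\<lambda>_. 0)(?b := w)) ?B" by simp
    have "holds F P (\<rho>(?b := w)) ?B = holds F P ((\<lambda>_. 0)(?b := w)) ?B"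
      by (rule holds_cong) (use fvB in auto)
    with w0 have "\<not> holds F P (\<rho>(?b := w)) ?B" by simp
    then have "\<not> holds F P (\<lambda>y. teval F (\<rho>(?b := w)) ((\<sigma>(x := Var ?b)) y)) A"
      by (simp only: holds_fsubst not_False_eq_True)
    moreover have "holds F P (\<lambda>y. teval F (\<rho>(?b := w)) ((\<sigma>(x := Var ?b)) y)) A
       = holds F P ((\<lambda>y. teval F \<rho> (\<sigma> y))(x := w)) A"
      by (rule key_upd) simp
    ultimately have nA: "\<not> holds F P ((\<lambda>y. teval F \<rho> (\<sigma> y))(x := w)) A"
      by simp
    have e: "(\<lambda>y. teval F \<rho> ((\<sigma>(x := ?c)) y)) = (\<lambda>y. teval F \<rho> (\<sigma> y))(x := w)"
      using c Wv wdef by auto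
    have "ev F P p \<rho> (sk p (\<sigma>(x := ?c)) A)"
    proof (rule All.IH)
      show "closedsk p (\<sigma>(x := ?c)) A" using All.prems False by simp
      show "holds F P (\<lambda>y. teval F \<rho> ((\<sigma>(x := ?c)) y)) A = p"
        unfolding e using nA False by simp
    qed
    then show ?thesis using False by simp
  qed
next
  case (Ex x A) then show ?case by simp
qed simp

type_synonym tri = "int \<times> int \<times> int"

fun minv :: "nat \<Rightarrow> tri \<Rightarrow> bool" where
  "minv m (a, k, r) \<longleftrightarrow> a \<ge> 0 \<and> 0 \<le> r \<and> r < int m \<and> (a = 0 \<longrightarrow> r = 0 \<and> k \<ge> 0 \<and> int m dvd k)"

fun madd :: "nat \<Rightarrow> tri \<Rightarrow> tri \<Rightarrow> tri" where
  "madd m (a, k, r) (a', k', r') = (a + a', k + k', (r + r') mod int m)"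

fun msuc :: "nat \<Rightarrow> tri \<Rightarrow> tri" where
  "msuc m (a, k, r) = (a, k + int m, r)"

fun mpre :: "nat \<Rightarrow> tri \<Rightarrow> tri" where
  "mpre m (a, k, r) = (if a = 0 \<and> k = 0 then (a, k, r) else (a, k - int m, r))"

definition mzero :: tri where "mzero = (0, 0, 0)"

definition Mset :: "nat \<Rightarrow> tri set" where "Mset m = {t. minv m t}"

definition enc :: "nat \<Rightarrow> nat \<Rightarrow> tri" where "enc m = from_nat_into (Mset m)"
definition dec :: "nat \<Rightarrow> tri \<Rightarrow> nat" where "dec m = to_nat_on (Mset m)"

definition arg :: "nat \<Rightarrow> nat list \<Rightarrow> nat \<Rightarrow> nat" where
  "arg m xs i = (if i < length xs then xs ! i else dec m mzero)"

definition Fb :: "nat \<Rightarrow> sym \<Rightarrow> nat list \<Rightarrow> nat" where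
  "Fb m g xs = (if g = Named ''s'' then dec m (msuc m (enc m (arg m xs 0)))
     else if g = Named ''p'' then dec m (mpre m (enc m (arg m xs 0)))
     else if g = Named ''+'' then dec m (madd m (enc m (arg m xs 0)) (enc m (arg m xs 1)))
     else dec m mzero)"

definition Pm :: "string \<Rightarrow> nat list \<Rightarrow> bool" where "Pm r xs = False"

definition FM :: "nat \<Rightarrow> sym \<Rightarrow> nat list \<Rightarrow> nat" where "FM m = hull (Fb m) Pm"

lemma mzero_in: "0 < m \<Longrightarrow> mzero \<in> Mset m"
  by (simp add: Mset_def mzero_def)

lemma countable_Mset: "countable (Mset m)"
  by (rule countable_subset[of _ UNIV]) auto

lemma infinite_Mset: assumes m: "0 < m" shows "infinite (Mset m)"
proof
  assume fin: "finite (Mset m)"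
  have "range (\<lambda>j::nat. ((1::int), int j, (0::int))) \<subseteq> Mset m"
    using m by (auto simp: Mset_def)
  moreover have "inj (\<lambda>j::nat. ((1::int), int j, (0::int)))" by (auto simp: inj_def)
  ultimately show False using fin by (meson finite_imageD finite_subset infinite_UNIV_nat)
qed

lemma enc_in: "0 < m \<Longrightarrow> enc m n \<in> Mset m"
  unfolding enc_def by (rule from_nat_into) (use mzero_in[of m] in auto)

lemma enc_inv: "0 < m \<Longrightarrow> minv m (enc m n)"
  using enc_in[of m n] by (simp add: Mset_def)

lemma enc_dec: "t \<in> Mset m \<Longrightarrow> enc m (dec m t) = t"
  unfolding enc_def dec_def by (simp add: countable_Mset)

lemma dec_enc: "0 < m \<Longrightarrow> dec m (enc m n) = n"
  unfolding enc_def dec_def by (simp add: countable_Mset infinite_Mset)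

lemma dec_inj: "s \<in> Mset m \<Longrightarrow> t \<in> Mset m \<Longrightarrow> dec m s = dec m t \<longleftrightarrow> s = t"
  unfolding dec_def by (simp add: countable_Mset)

lemma FM_Named: "FM m (Named s) = Fb m (Named s)"
  by (simp add: FM_def hull_Named)

lemma teval_zero: "teval (FM m) \<rho> zero = dec m mzero"
  by (simp add: zero_def FM_Named Fb_def)

lemma teval_suc: "teval (FM m) \<rho> (suc t) = dec m (msuc m (enc m (teval (FM m) \<rho> t)))"
  by (simp add: suc_def FM_Named Fb_def arg_def)

lemma teval_pre: "teval (FM m) \<rho> (pre t) = dec m (mpre m (enc m (teval (FM m) \<rho> t)))"
  by (simp add: pre_def FM_Named Fb_def arg_def)

lemma teval_plus: "teval (FM m) \<rho> (plus t u) = dec m (madd m (enc m (teval (FM m) \<rho> t)) (enc m (teval (FM m) \<rho> u)))"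
  by (simp add: plus_def FM_Named Fb_def arg_def)

lemma minv_msuc: "minv m v \<Longrightarrow> minv m (msuc m v)"
  by (cases v) auto

lemma minv_mpre: "minv m v \<Longrightarrow> minv m (mpre m v)"
  by (cases v) (auto simp: dvd_diff dest: zdvd_imp_le)

lemma minv_madd: "0 < m \<Longrightarrow> minv m v \<Longrightarrow> minv m w \<Longrightarrow> minv m (madd m v w)"
  by (cases v; cases w) auto

lemma in_Mset: "minv m v \<Longrightarrow> v \<in> Mset m" by (simp add: Mset_def)

lemma mod_cancel_aux:
  fixes r r' r'' M :: int
  assumes "0 \<le> r'" "r' < M" "0 \<le> r''" "r'' < M" "(r + r') mod M = (r + r'') mod M"
  shows "r' = r''"
proof -
  have "((r + r') - r) mod M = ((r + r'') - r) mod M" using assms(5) by (rule mod_diff_cong) simp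
  then have "r' mod M = r'' mod M" by simp
  then show ?thesis using assms(1-4) by simp
qed

lemma L1: "minv m v \<Longrightarrow> 0 < m \<Longrightarrow> msuc m v \<noteq> mzero"
  by (cases v) (auto simp: mzero_def)
lemma L2: "mpre m mzero = mzero" by (simp add: mzero_def)
lemma L3: "minv m v \<Longrightarrow> 0 < m \<Longrightarrow> mpre m (msuc m v) = v"
  by (cases v) auto
lemma L4: "minv m v \<Longrightarrow> madd m v mzero = v"
  by (cases v) (auto simp: mzero_def)
lemma L5: "madd m v (msuc m w) = msuc m (madd m v w)"
  by (cases v; cases w) auto
lemma L6: "minv m v \<Longrightarrow> v \<noteq> mzero \<Longrightarrow> v = msuc m (mpre m v)"
  by (cases v) (auto simp: mzero_def)
lemma L7: "madd m v w = madd m w v"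
  by (cases v; cases w) (auto simp: add.commute)
lemma L8: "madd m (madd m u v) w = madd m u (madd m v w)"
  by (cases u; cases v; cases w) (auto simp: mod_add_left_eq mod_add_right_eq add.assoc)
lemma L9: "minv m w \<Longrightarrow> minv m w' \<Longrightarrow> madd m u w = madd m u w' \<Longrightarrow> w = w'"
  apply (cases u; cases w; cases w')
  using mod_cancel_aux by auto

fun mm :: "nat \<Rightarrow> nat \<Rightarrow> tri \<Rightarrow> tri" where
  "mm m 0 v = mzero"
| "mm m (Suc 0) v = v"
| "mm m (Suc (Suc j)) v = madd m v (mm m (Suc j) v)"

lemma mm_closed: "0 \<le> r \<Longrightarrow> r < int m \<Longrightarrow> mm m j (a, k, r) = (int j * a, int j * k, (int j * r) mod int m)"
proof (induction m j "(a, k, r)" rule: mm.induct)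
  case (1 m) then show ?case by (simp add: mzero_def)
next
  case (2 m) then show ?case by simp
next
  case (3 m j)
  then show ?case by (simp add: mod_add_right_eq algebra_simps)
qed

lemma msuc_pow: "(msuc m ^^ n) (a, k, r) = (a, k + int n * int m, r)"
  by (induction n) (auto simp: algebra_simps)

context
  fixes m :: nat assumes m: "0 < m"
begin

lemma encM[simp]: "minv m (enc m n)" using enc_inv m by blast
lemma decenc[simp]: "dec m (enc m n) = n" using dec_enc m by blast
lemma encdec[simp]: "minv m t \<Longrightarrow> enc m (dec m t) = t" using enc_dec in_Mset by blast
lemma minv_msuc'[simp]: "minv m v \<Longrightarrow> minv m (msuc m v)" by (rule minv_msuc)
lemma minv_mpre'[simp]: "minv m v \<Longrightarrow> minv m (mpre m v)" by (rule minv_mpre)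
lemma minv_madd'[simp]: "minv m v \<Longrightarrow> minv m w \<Longrightarrow> minv m (madd m v w)" using minv_madd m by blast
lemma minv_zero[simp]: "minv m mzero" using m by (simp add: mzero_def)
lemma decinj[simp]: "minv m s \<Longrightarrow> minv m t \<Longrightarrow> dec m s = dec m t \<longleftrightarrow> s = t"
  using dec_inj in_Mset by blast
lemma code_eq: "(x = y) \<longleftrightarrow> enc m x = enc m y"
  by (metis decenc)

lemma T'_holds: "A \<in> T'_axioms \<Longrightarrow> holds (FM m) Pm \<rho> A"
  unfolding T'_axioms_def T_axioms_def
  apply (simp only: insert_iff Un_iff empty_iff)
  apply (elim disjE)
  apply (simp_all add: teval_zero teval_suc teval_pre teval_plus)
  subgoal using L1 m by (metis encM minv_zero decinj minv_msuc')
  subgoal by (simp add: L2)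
  subgoal by (simp add: L3 m)
  subgoal by (simp add: L4)
  subgoal by (simp add: L5)
  subgoal by (metis L6 decenc decinj encM minv_zero)
  subgoal by (simp add: L7)
  subgoal by (simp add: L8)
  subgoal by (metis L9 code_eq encM encdec minv_madd')
  done

lemma minv_mm[simp]: "minv m v \<Longrightarrow> minv m (mm m j v)"
proof (induction j rule: nat_less_induct)
  case (1 j)
  show ?case
  proof (cases j)
    case 0 then show ?thesis by simp
  next
    case (Suc j')
    show ?thesis
    proof (cases j')
      case 0 then show ?thesis using Suc 1 by simp
    next
      case (Suc j'')
      then show ?thesis using \<open>j = Suc j'\<close> 1 by simp
    qed
  qed
qed

lemma teval_mul: "teval (FM m) \<rho> (mul j t) = dec m (mm m j (enc m (teval (FM m) \<rho> t)))"
  by (induction j t rule: mul.induct) (simp_all add: teval_zero teval_plus)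

lemma teval_sucs: "teval (FM m) \<rho> (sucs n t) = dec m ((msuc m ^^ n) (enc m (teval (FM m) \<rho> t)))"
proof (induction n)
  case 0 then show ?case by (simp add: sucs_def)
next
  case (Suc n)
  have "minv m ((msuc m ^^ n) (enc m (teval (FM m) \<rho> t)))"
    by (induction n) auto
  then show ?case using Suc by (simp add: sucs_def teval_suc)
qed

lemma negC_holds: assumes "2 \<le> m" shows "holds (FM m) Pm \<rho> (Neg (C_fm m))"
proof -
  let ?v = "dec m (1, 0, 1)" and ?w = "dec m (1, 0, 0)"
  have i1: "minv m (1, 0, 1)" using assms by simp
  have i2: "minv m (1, 0, 0)" using assms by simp
  have ne: "?v \<noteq> ?w" using i1 i2 by simp
  have "mm m m (1, 0, 1) = mm m m (1, 0, 0)"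
    using assms by (simp add: mm_closed)
  then have "teval (FM m) (\<rho>(0 := ?v, 1 := ?w)) (mul m vx) = teval (FM m) (\<rho>(0 := ?v, 1 := ?w)) (mul m vy)"
    using i1 i2 by (simp add: teval_mul)
  then have "\<not> holds (FM m) Pm (\<rho>(0 := ?v, 1 := ?w)) (Imp (Eq (mul m vx) (mul m vy)) (Eq vx vy))"
    using ne by simp
  then show ?thesis unfolding C_fm_def by (simp only: holds.simps) blast
qed

lemma negD_holds: "holds (FM m) Pm \<rho> (Neg (D_fm m n))"
proof -
  let ?v = "dec m (1, 0, 0)" and ?w = "dec m (1, int n, 0)"
  have i1: "minv m (1, 0, 0)" using m by simp
  have i2: "minv m (1, int n, 0)" using m by simp
  have "(msuc m ^^ n) (mm m m (1, 0, 0)) = mm m m (1, int n, 0)"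
    using m by (simp add: mm_closed msuc_pow)
  then have "teval (FM m) (\<rho>(0 := ?v, 1 := ?w)) (sucs n (mul m vx)) = teval (FM m) (\<rho>(0 := ?v, 1 := ?w)) (mul m vy)"
    using i1 i2 by (simp add: teval_mul teval_sucs)
  then have "\<not> holds (FM m) Pm (\<rho>(0 := ?v, 1 := ?w)) (Neg (Eq (sucs n (mul m vx)) (mul m vy)))"
    by simp
  then show ?thesis unfolding D_fm_def by (simp only: holds.simps) blast
qed

end

fun lin :: "nat \<Rightarrow> nat \<Rightarrow> tri \<Rightarrow> tri \<Rightarrow> tri" where
  "lin m \<alpha> (a, k, r) (ca, ck, cr) = (int \<alpha> * a + ca, int \<alpha> * k + ck, (int \<alpha> * r + cr) mod int m)"

fun large :: "int \<Rightarrow> tri \<Rightarrow> bool" where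
  "large N (a, k, r) \<longleftrightarrow> a \<ge> 1 \<or> k \<ge> N"

definition linrep :: "nat \<Rightarrow> (tri \<Rightarrow> nat) \<Rightarrow> bool" where
  "linrep m f \<longleftrightarrow> (\<exists>\<alpha> ca ck cr N. ca \<ge> 0 \<and>
      (\<forall>v. minv m v \<longrightarrow> large N v \<longrightarrow> enc m (f v) = lin m \<alpha> v (ca, ck, cr)))"

context
  fixes m :: nat assumes m: "0 < m"
begin

lemma linrep_const: "linrep m (\<lambda>v. c)"
proof -
  obtain ca ck cr where e: "enc m c = (ca, ck, cr)" by (cases "enc m c") auto
  have i: "minv m (ca, ck, cr)" using encM[OF m, of c] e by simp
  show ?thesis unfolding linrep_def
    by (rule exI[of _ 0], rule exI[of _ ca], rule exI[of _ ck], rule exI[of _ cr], rule exI[of _ 0])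
       (use i e in auto)
qed

lemma linrep_id: "linrep m (\<lambda>v. dec m v)"
  unfolding linrep_def
  by (rule exI[of _ 1], rule exI[of _ 0], rule exI[of _ 0], rule exI[of _ 0], rule exI[of _ 0])
     (auto simp: m)

lemma linrep_suc: "linrep m f \<Longrightarrow> linrep m (\<lambda>v. dec m (msuc m (enc m (f v))))"
proof -
  assume "linrep m f"
  then obtain \<alpha> ca ck cr N where c: "ca \<ge> 0" and h: "\<And>v. minv m v \<Longrightarrow> large N v \<Longrightarrow> enc m (f v) = lin m \<alpha> v (ca, ck, cr)"
    unfolding linrep_def by blast
  have "\<forall>v. minv m v \<longrightarrow> large N v \<longrightarrow> enc m (dec m (msuc m (enc m (f v)))) = lin m \<alpha> v (ca, ck + int m, cr)"
  proof (intro allI impI)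
    fix v assume v: "minv m v" "large N v"
    have "enc m (dec m (msuc m (enc m (f v)))) = msuc m (enc m (f v))" by (simp add: m)
    also have "\<dots> = msuc m (lin m \<alpha> v (ca, ck, cr))" using h[OF v] by simp
    also have "\<dots> = lin m \<alpha> v (ca, ck + int m, cr)" by (cases v) simp
    finally show "enc m (dec m (msuc m (enc m (f v)))) = lin m \<alpha> v (ca, ck + int m, cr)" .
  qed
  then show ?thesis unfolding linrep_def using c by blast
qed

lemma linrep_plus: "linrep m f \<Longrightarrow> linrep m g \<Longrightarrow> linrep m (\<lambda>v. dec m (madd m (enc m (f v)) (enc m (g v))))"
proof -
  assume "linrep m f" "linrep m g"
  then obtain \<alpha> ca ck cr N \<beta> da dk dr N' where c: "ca \<ge> 0" "da \<ge> 0"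
    and h: "\<And>v. minv m v \<Longrightarrow> large N v \<Longrightarrow> enc m (f v) = lin m \<alpha> v (ca, ck, cr)"
    and h': "\<And>v. minv m v \<Longrightarrow> large N' v \<Longrightarrow> enc m (g v) = lin m \<beta> v (da, dk, dr)"
    unfolding linrep_def by metis
  have "\<forall>v. minv m v \<longrightarrow> large (max N N') v \<longrightarrow> enc m (dec m (madd m (enc m (f v)) (enc m (g v)))) = lin m (\<alpha> + \<beta>) v (ca + da, ck + dk, cr + dr)"
  proof (intro allI impI)
    fix v assume v: "minv m v" "large (max N N') v"
    obtain a k r where vv: "v = (a, k, r)" by (cases v) auto
    have l1: "large N v" "large N' v" using v(2) vv by auto
    have "enc m (dec m (madd m (enc m (f v)) (enc m (g v)))) = madd m (enc m (f v)) (enc m (g v))" by (simp add: m)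
    also have "\<dots> = madd m (lin m \<alpha> v (ca, ck, cr)) (lin m \<beta> v (da, dk, dr))"
      using h[OF v(1) l1(1)] h'[OF v(1) l1(2)] by simp
    also have "\<dots> = lin m (\<alpha> + \<beta>) v (ca + da, ck + dk, cr + dr)"
    proof -
      have "((int \<alpha> * r + cr) mod int m + (int \<beta> * r + dr) mod int m) mod int m
          = (int (\<alpha> + \<beta>) * r + (cr + dr)) mod int m"
        by (simp add: mod_add_eq algebra_simps)
      then show ?thesis using vv by (simp add: algebra_simps)
    qed
    finally show "enc m (dec m (madd m (enc m (f v)) (enc m (g v)))) = lin m (\<alpha> + \<beta>) v (ca + da, ck + dk, cr + dr)" .
  qed
  then show ?thesis unfolding linrep_def using c by (metis add_nonneg_nonneg)
qed

lemma linrep_pre: "linrep m f \<Longrightarrow> linrep m (\<lambda>v. dec m (mpre m (enc m (f v))))"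
proof -
  assume "linrep m f"
  then obtain \<alpha> ca ck cr N where c: "ca \<ge> 0" and h: "\<And>v. minv m v \<Longrightarrow> large N v \<Longrightarrow> enc m (f v) = lin m \<alpha> v (ca, ck, cr)"
    unfolding linrep_def by blast
  show ?thesis
  proof (cases "\<alpha> = 0")
    case True
    let ?d = "mpre m (ca, ck, cr mod int m)"
    obtain da dk dr where d: "?d = (da, dk, dr)" by (cases ?d) auto
    have dd: "da = ca" "dr = cr mod int m" using d by (auto split: if_splits)
    have "\<forall>v. minv m v \<longrightarrow> large N v \<longrightarrow> enc m (dec m (mpre m (enc m (f v)))) = lin m 0 v (da, dk, dr)"
    proof (intro allI impI)
      fix v assume v: "minv m v" "large N v"
      have "enc m (f v) = (ca, ck, cr mod int m)" using h[OF v] True by (cases v) simp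
      have "enc m (dec m (mpre m (enc m (f v)))) = mpre m (enc m (f v))" by (simp add: m)
      also have "\<dots> = (da, dk, dr)" using d \<open>enc m (f v) = (ca, ck, cr mod int m)\<close> by simp
      also have "\<dots> = lin m 0 v (da, dk, dr)" using dd m by (cases v) simp
      finally show "enc m (dec m (mpre m (enc m (f v)))) = lin m 0 v (da, dk, dr)" .
    qed
    then show ?thesis unfolding linrep_def using c dd by blast
  next
    case False
    define N' where "N' = max N (\<bar>ck\<bar> + 1)"
    have "\<forall>v. minv m v \<longrightarrow> large N' v \<longrightarrow> enc m (dec m (mpre m (enc m (f v)))) = lin m \<alpha> v (ca, ck - int m, cr)"
    proof (intro allI impI)
      fix v assume v: "minv m v" "large N' v"
      obtain a k r where vv: "v = (a, k, r)" by (cases v) auto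
      have lN: "large N v" using v(2) vv N'_def by auto
      have e: "enc m (f v) = lin m \<alpha> v (ca, ck, cr)" using h[OF v(1) lN] .
      have a0: "a \<ge> 0" using v(1) vv by simp
      have al: "int \<alpha> \<ge> 1" using False by simp
      have nz: "\<not> (int \<alpha> * a + ca = 0 \<and> int \<alpha> * k + ck = 0)"
      proof
        assume z: "int \<alpha> * a + ca = 0 \<and> int \<alpha> * k + ck = 0"
        have "int \<alpha> * a \<ge> 0" using a0 by simp
        then have "int \<alpha> * a = 0" using z c by linarith
        then have "a = 0" using False by simp
        then have "k \<ge> \<bar>ck\<bar> + 1" using v(2) vv N'_def by auto
        then have k0: "k \<ge> 0" by linarith
        have "1 * k \<le> int \<alpha> * k" by (rule mult_right_mono) (use al k0 in auto)
        then have "int \<alpha> * k \<ge> k" by simp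
        then show False using z \<open>k \<ge> \<bar>ck\<bar> + 1\<close> by linarith
      qed
      have "enc m (dec m (mpre m (enc m (f v)))) = mpre m (enc m (f v))" by (simp add: m)
      also have "\<dots> = mpre m (lin m \<alpha> v (ca, ck, cr))" using e by simp
      also have "\<dots> = lin m \<alpha> v (ca, ck - int m, cr)" using nz vv by auto
      finally show "enc m (dec m (mpre m (enc m (f v)))) = lin m \<alpha> v (ca, ck - int m, cr)" .
    qed
    then show ?thesis unfolding linrep_def using c by blast
  qed
qed

lemma linrep_arg:
  assumes "\<And>u. u \<in> set ts \<Longrightarrow> linrep m (\<lambda>v. teval (FM m) (\<rho>(x := dec m v)) u)"
  shows "linrep m (\<lambda>v. arg m (map (teval (FM m) (\<rho>(x := dec m v))) ts) i)"
proof (cases "i < length ts")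
  case True
  have "(\<lambda>v. arg m (map (teval (FM m) (\<rho>(x := dec m v))) ts) i) = (\<lambda>v. teval (FM m) (\<rho>(x := dec m v)) (ts ! i))"
    using True by (simp add: arg_def)
  then show ?thesis using assms[of "ts ! i"] True by simp
next
  case False
  have "(\<lambda>v. arg m (map (teval (FM m) (\<rho>(x := dec m v))) ts) i) = (\<lambda>v. dec m mzero)"
    using False by (simp add: arg_def)
  then show ?thesis using linrep_const by simp
qed

lemma linrep_term: "linrep m (\<lambda>v. teval (FM m) (\<rho>(x := dec m v)) t)"
proof (induction t)
  case (Var y)
  show ?case
  proof (cases "y = x")
    case True then show ?thesis using linrep_id by simp
  next
    case False then show ?thesis using linrep_const by simp
  qed
next
  case (Fn g ts)
  let ?A = "\<lambda>i v. arg m (map (teval (FM m) (\<rho>(x := dec m v))) ts) i"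
  have A: "linrep m (?A i)" for i by (rule linrep_arg) (use Fn.IH in blast)
  show ?case
  proof (cases g)
    case (Sk Q)
    have eq: "(\<lambda>v. teval (FM m) (\<rho>(x := dec m v)) (Fn g ts)) = (\<lambda>v. W (FM m) Pm Q)"
      using Sk by (simp add: FM_def hull_Sk)
    show ?thesis unfolding eq by (rule linrep_const)
  next
    case (Named s)
    have e: "(\<lambda>v. teval (FM m) (\<rho>(x := dec m v)) (Fn g ts)) = (\<lambda>v. Fb m (Named s) (map (teval (FM m) (\<rho>(x := dec m v))) ts))"
      using Named by (simp add: FM_Named)
    show ?thesis
    proof (cases "s = ''s''")
      case True
      then show ?thesis unfolding e using linrep_suc[OF A[of 0]] by (simp add: Fb_def)
    next
      case s1: False
      show ?thesis
      proof (cases "s = ''p''")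
        case True
        then show ?thesis unfolding e using linrep_pre[OF A[of 0]] by (simp add: Fb_def)
      next
        case s2: False
        show ?thesis
        proof (cases "s = ''+''")
          case True
          then show ?thesis unfolding e using linrep_plus[OF A[of 0] A[of 1]] by (simp add: Fb_def)
        next
          case False
          then show ?thesis unfolding e using s1 s2 linrep_const by (simp add: Fb_def)
        qed
      qed
    qed
  qed
qed

end

fun shift :: "nat \<Rightarrow> tri \<Rightarrow> nat \<Rightarrow> tri" where
  "shift m (a, k, r) j = (a, k + int j * int m, r)"

definition Exc :: "nat \<Rightarrow> (nat \<Rightarrow> nat) \<Rightarrow> nat \<Rightarrow> sym fm \<Rightarrow> bool \<Rightarrow> tri \<Rightarrow> nat set" where
  "Exc m \<rho> x \<phi> V v0 = {j. holds (FM m) Pm (\<rho>(x := dec m (shift m v0 j))) \<phi> \<noteq> V}"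

definition evc :: "nat \<Rightarrow> (nat \<Rightarrow> nat) \<Rightarrow> nat \<Rightarrow> sym fm \<Rightarrow> bool" where
  "evc m \<rho> x \<phi> \<longleftrightarrow> (\<exists>N V K. \<forall>v0. minv m v0 \<longrightarrow> large N v0 \<longrightarrow>
      finite (Exc m \<rho> x \<phi> V v0) \<and> card (Exc m \<rho> x \<phi> V v0) \<le> K)"

lemma lin_inj:
  fixes A B c d X Y :: int
  assumes "A \<noteq> B" "A * X + c = B * X + d" "A * Y + c = B * Y + d"
  shows "X = Y"
proof -
  have "(A - B) * X = (A - B) * Y" using assms(2,3) by (simp add: algebra_simps)
  then show ?thesis using assms(1) by simp
qed

lemma mod_add_cancel_iff:
  fixes x y z M :: int
  shows "(x + y) mod M = (x + z) mod M \<longleftrightarrow> y mod M = z mod M"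
proof
  assume "(x + y) mod M = (x + z) mod M"
  then have "((x + y) - x) mod M = ((x + z) - x) mod M" by (rule mod_diff_cong) simp
  then show "y mod M = z mod M" by simp
next
  assume "y mod M = z mod M"
  then show "(x + y) mod M = (x + z) mod M" by (metis mod_add_right_eq)
qed

lemma card_combine:
  assumes "finite E1" "finite E2" "card E1 \<le> K1" "card E2 \<le> K2" "E \<subseteq> E1 \<union> E2"
  shows "finite E \<and> card E \<le> K1 + K2"
proof
  show "finite E" using assms by (meson finite_UnI finite_subset)
  have "card E \<le> card (E1 \<union> E2)" using assms by (simp add: card_mono)
  also have "\<dots> \<le> card E1 + card E2" by (rule card_Un_le)
  finally show "card E \<le> K1 + K2" using assms by simp
qed

lemma large_mono: "large N v \<Longrightarrow> N' \<le> N \<Longrightarrow> large N' v"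
  by (cases v) auto

lemma evc_bin:
  assumes "evc m \<rho> x \<phi>1" "evc m \<rho> x \<phi>2"
    and h: "\<And>\<rho>'. holds (FM m) Pm \<rho>' \<psi> = f (holds (FM m) Pm \<rho>' \<phi>1) (holds (FM m) Pm \<rho>' \<phi>2)"
  shows "evc m \<rho> x \<psi>"
proof -
  obtain N1 V1 K1 where 1: "\<And>v0. minv m v0 \<Longrightarrow> large N1 v0 \<Longrightarrow> finite (Exc m \<rho> x \<phi>1 V1 v0) \<and> card (Exc m \<rho> x \<phi>1 V1 v0) \<le> K1"
    using assms(1) unfolding evc_def by blast
  obtain N2 V2 K2 where 2: "\<And>v0. minv m v0 \<Longrightarrow> large N2 v0 \<Longrightarrow> finite (Exc m \<rho> x \<phi>2 V2 v0) \<and> card (Exc m \<rho> x \<phi>2 V2 v0) \<le> K2"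
    using assms(2) unfolding evc_def by blast
  have "\<forall>v0. minv m v0 \<longrightarrow> large (max N1 N2) v0 \<longrightarrow>
      finite (Exc m \<rho> x \<psi> (f V1 V2) v0) \<and> card (Exc m \<rho> x \<psi> (f V1 V2) v0) \<le> K1 + K2"
  proof (intro allI impI)
    fix v0 assume v0: "minv m v0" "large (max N1 N2) v0"
    have l: "large N1 v0" "large N2 v0" using v0(2) large_mono by auto
    show "finite (Exc m \<rho> x \<psi> (f V1 V2) v0) \<and> card (Exc m \<rho> x \<psi> (f V1 V2) v0) \<le> K1 + K2"
    proof (rule card_combine)
      show "Exc m \<rho> x \<psi> (f V1 V2) v0 \<subseteq> Exc m \<rho> x \<phi>1 V1 v0 \<union> Exc m \<rho> x \<phi>2 V2 v0"
      proof
        fix j assume "j \<in> Exc m \<rho> x \<psi> (f V1 V2) v0"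
        then have a: "holds (FM m) Pm (\<rho>(x := dec m (shift m v0 j))) \<psi> \<noteq> f V1 V2" unfolding Exc_def by simp
        show "j \<in> Exc m \<rho> x \<phi>1 V1 v0 \<union> Exc m \<rho> x \<phi>2 V2 v0"
        proof (rule ccontr)
          assume "j \<notin> Exc m \<rho> x \<phi>1 V1 v0 \<union> Exc m \<rho> x \<phi>2 V2 v0"
          then have "holds (FM m) Pm (\<rho>(x := dec m (shift m v0 j))) \<phi>1 = V1"
            "holds (FM m) Pm (\<rho>(x := dec m (shift m v0 j))) \<phi>2 = V2" unfolding Exc_def by auto
          then show False using a h by simp
        qed
      qed
    qed (use 1[OF v0(1) l(1)] 2[OF v0(1) l(2)] in auto)
  qed
  then show ?thesis unfolding evc_def by blast
qed

lemma evc_neg: "evc m \<rho> x \<phi> \<Longrightarrow> evc m \<rho> x (Neg \<phi>)"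
proof -
  assume "evc m \<rho> x \<phi>"
  then obtain N V K where 1: "\<And>v0. minv m v0 \<Longrightarrow> large N v0 \<Longrightarrow> finite (Exc m \<rho> x \<phi> V v0) \<and> card (Exc m \<rho> x \<phi> V v0) \<le> K"
    unfolding evc_def by blast
  have "Exc m \<rho> x (Neg \<phi>) (\<not> V) v0 = Exc m \<rho> x \<phi> V v0" for v0
    unfolding Exc_def by auto
  then show ?thesis unfolding evc_def using 1 by metis
qed

lemma evc_const: "(\<And>\<rho>'. holds (FM m) Pm \<rho>' \<phi> = V) \<Longrightarrow> evc m \<rho> x \<phi>"
proof -
  assume h: "\<And>\<rho>'. holds (FM m) Pm \<rho>' \<phi> = V"
  have "Exc m \<rho> x \<phi> V v0 = {}" for v0 unfolding Exc_def using h by auto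
  then show ?thesis unfolding evc_def by (metis card.empty finite.emptyI le_refl)
qed

context
  fixes m :: nat assumes m: "0 < m"
begin

lemma minv_shift: "minv m v \<Longrightarrow> minv m (shift m v j)"
  by (cases v) (auto simp: m)

lemma large_shift: "large N v \<Longrightarrow> large N (shift m v j)"
proof -
  assume l: "large N v"
  obtain a k r where vv: "v = (a, k, r)" by (cases v) auto
  have "int j * int m \<ge> 0" by simp
  then have kk: "k + int j * int m \<ge> k" by linarith
  have "a \<ge> 1 \<or> k \<ge> N" using l vv by simp
  then have "a \<ge> 1 \<or> k + int j * int m \<ge> N"
  proof
    assume "k \<ge> N" then show ?thesis using kk by linarith
  qed simp
  then show ?thesis using vv by (simp only: shift.simps large.simps)
qed

lemma evc_eq: "evc m \<rho> x (Eq s t)"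
proof -
  obtain \<alpha> ca ck cr N1 where hs: "\<And>v. minv m v \<Longrightarrow> large N1 v \<Longrightarrow> enc m (teval (FM m) (\<rho>(x := dec m v)) s) = lin m \<alpha> v (ca, ck, cr)"
    using linrep_term[OF m, of \<rho> x s] unfolding linrep_def by blast
  obtain \<beta> da dk dr N2 where ht: "\<And>v. minv m v \<Longrightarrow> large N2 v \<Longrightarrow> enc m (teval (FM m) (\<rho>(x := dec m v)) t) = lin m \<beta> v (da, dk, dr)"
    using linrep_term[OF m, of \<rho> x t] unfolding linrep_def by blast
  let ?N = "max N1 N2"
  have H: "holds (FM m) Pm (\<rho>(x := dec m v)) (Eq s t) \<longleftrightarrow> lin m \<alpha> v (ca, ck, cr) = lin m \<beta> v (da, dk, dr)"
    if "minv m v" "large ?N v" for v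
  proof -
    have l: "large N1 v" "large N2 v" using that(2) large_mono by auto
    have "holds (FM m) Pm (\<rho>(x := dec m v)) (Eq s t) \<longleftrightarrow>
        enc m (teval (FM m) (\<rho>(x := dec m v)) s) = enc m (teval (FM m) (\<rho>(x := dec m v)) t)"
      using code_eq[OF m] by simp
    then show ?thesis using hs[OF that(1) l(1)] ht[OF that(1) l(2)] by simp
  qed
  show ?thesis
  proof (cases "\<alpha> = \<beta>")
    case True
    let ?V = "ca = da \<and> ck = dk \<and> cr mod int m = dr mod int m"
    have "Exc m \<rho> x (Eq s t) ?V v0 = {}" if v0: "minv m v0" "large ?N v0" for v0
    proof -
      have "holds (FM m) Pm (\<rho>(x := dec m (shift m v0 j))) (Eq s t) = ?V" for j
      proof -
        obtain a k r where vv: "shift m v0 j = (a, k, r)" by (cases "shift m v0 j") auto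
        have "holds (FM m) Pm (\<rho>(x := dec m (shift m v0 j))) (Eq s t) \<longleftrightarrow>
            lin m \<alpha> (shift m v0 j) (ca, ck, cr) = lin m \<beta> (shift m v0 j) (da, dk, dr)"
          by (rule H) (use minv_shift large_shift v0 in auto)
        also have "\<dots> \<longleftrightarrow> ?V" using True vv by (simp add: mod_add_cancel_iff)
        finally show ?thesis .
      qed
      then show ?thesis unfolding Exc_def by auto
    qed
    then show ?thesis unfolding evc_def by (metis card.empty finite.emptyI le_refl)
  next
    case False
    have fin: "finite (Exc m \<rho> x (Eq s t) False v0) \<and> card (Exc m \<rho> x (Eq s t) False v0) \<le> 1"
      if v0: "minv m v0" "large ?N v0" for v0
    proof -
      obtain a0 k0 r0 where vv: "v0 = (a0, k0, r0)" by (cases v0) auto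
      have mem: "int \<alpha> * (k0 + int j * int m) + ck = int \<beta> * (k0 + int j * int m) + dk"
        if "j \<in> Exc m \<rho> x (Eq s t) False v0" for j
      proof -
        have "holds (FM m) Pm (\<rho>(x := dec m (shift m v0 j))) (Eq s t)" using that unfolding Exc_def by simp
        moreover have "holds (FM m) Pm (\<rho>(x := dec m (shift m v0 j))) (Eq s t) \<longleftrightarrow>
            lin m \<alpha> (shift m v0 j) (ca, ck, cr) = lin m \<beta> (shift m v0 j) (da, dk, dr)"
          by (rule H) (use minv_shift large_shift v0 in auto)
        ultimately show ?thesis using vv by simp
      qed
      have sub: "Exc m \<rho> x (Eq s t) False v0 \<subseteq> {j0}" if "j0 \<in> Exc m \<rho> x (Eq s t) False v0" for j0
      proof
        fix j assume j: "j \<in> Exc m \<rho> x (Eq s t) False v0"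
        have "k0 + int j * int m = k0 + int j0 * int m"
          by (rule lin_inj[of "int \<alpha>" "int \<beta>" _ ck dk]) (use False mem[OF j] mem[OF that] in auto)
        then show "j \<in> {j0}" using m by simp
      qed
      show ?thesis
      proof (cases "Exc m \<rho> x (Eq s t) False v0 = {}")
        case True then show ?thesis by simp
      next
        case False
        then obtain j0 where "j0 \<in> Exc m \<rho> x (Eq s t) False v0" by blast
        then have "Exc m \<rho> x (Eq s t) False v0 \<subseteq> {j0}" by (rule sub)
        then show ?thesis by (metis card.empty card.insert finite.emptyI finite.insertI empty_iff finite_subset card_mono le_refl One_nat_def)
      qed
    qed
    show ?thesis unfolding evc_def
      by (rule exI[of _ ?N], rule exI[of _ False], rule exI[of _ 1]) (use fin in blast)
  qed
qed

lemma evc_qfree: "qfree \<phi> \<Longrightarrow> evc m \<rho> x \<phi>"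
proof (induction \<phi>)
  case Bot show ?case by (rule evc_const[where V=False]) simp
next
  case (Eq s t) show ?case by (rule evc_eq)
next
  case (Rel r ts) show ?case by (rule evc_const[where V=False]) (simp add: Pm_def)
next
  case (Neg A) then show ?case using evc_neg by simp
next
  case (Conj A B) then show ?case using evc_bin[of m \<rho> x A B "Conj A B" "(\<and>)"] by simp
next
  case (Disj A B) then show ?case using evc_bin[of m \<rho> x A B "Disj A B" "(\<or>)"] by simp
next
  case (Imp A B) then show ?case using evc_bin[of m \<rho> x A B "Imp A B" "(\<longrightarrow>)"] by simp
qed simp_all

end

context
  fixes m :: nat assumes m: "0 < m"
begin

lemma open_ind:
  assumes q: "qfree \<phi>"
    and base: "holds (FM m) Pm (\<rho>(x := dec m mzero)) \<phi>"
    and step: "\<And>w. holds (FM m) Pm (\<rho>(x := w)) \<phi> \<Longrightarrow> holds (FM m) Pm (\<rho>(x := dec m (msuc m (enc m w)))) \<phi>"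
  shows "holds (FM m) Pm (\<rho>(x := w)) \<phi>"
proof -
  define H where "H v = holds (FM m) Pm (\<rho>(x := dec m v)) \<phi>" for v
  have stepH: "H (msuc m v)" if "minv m v" "H v" for v
    using step[of "dec m v"] that m unfolding H_def by (simp add: m)
  have std: "H (0, int n * int m, 0)" for n
  proof (induction n)
    case 0 then show ?case using base unfolding H_def by (simp add: mzero_def)
  next
    case (Suc n)
    have "minv m (0, int n * int m, 0)" using m by simp
    then have "H (msuc m (0, int n * int m, 0))" using stepH Suc by blast
    then show ?case by (simp add: algebra_simps)
  qed
  obtain N V K where NVK: "\<And>v0. minv m v0 \<Longrightarrow> large N v0 \<Longrightarrow> finite (Exc m \<rho> x \<phi> V v0) \<and> card (Exc m \<rho> x \<phi> V v0) \<le> K"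
    using evc_qfree[OF m q, of \<rho> x] unfolding evc_def by blast
  have V: V
  proof (rule ccontr)
    assume nV: "\<not> V"
    define n0 where "n0 = nat N"
    let ?v0 = "(0::int, int n0 * int m, 0::int)"
    have i0: "minv m ?v0" using m by simp
    have "int n0 * 1 \<le> int n0 * int m" by (rule mult_left_mono) (use m in auto)
    moreover have "int n0 \<ge> N" unfolding n0_def by simp
    ultimately have l0: "large N ?v0" by simp
    have "Exc m \<rho> x \<phi> V ?v0 = UNIV"
    proof -
      have "H (shift m ?v0 j)" for j
        using std[of "n0 + j"] by (simp add: algebra_simps)
      then show ?thesis using nV unfolding Exc_def H_def by auto
    qed
    then show False using NVK[OF i0 l0] by simp
  qed
  obtain a k r where e: "enc m w = (a, k, r)" by (cases "enc m w") auto
  have iv: "minv m (a, k, r)" using e encM[OF m, of w] by simp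
  have Hw: "H (a, k, r) = holds (FM m) Pm (\<rho>(x := w)) \<phi>"
    unfolding H_def using e decenc[OF m, of w] by metis
  show ?thesis
  proof (cases "a = 0")
    case True
    then have "r = 0" "k \<ge> 0" "int m dvd k" using iv by auto
    then obtain q where q: "k = int m * q" by (meson dvdE)
    have "q \<ge> 0"
    proof (rule ccontr)
      assume "\<not> q \<ge> 0"
      then have "int m * q < 0" using m by (simp add: mult_pos_neg)
      then show False using q \<open>k \<ge> 0\<close> by simp
    qed
    then have "(a, k, r) = (0, int (nat q) * int m, 0)" using True \<open>r = 0\<close> q by simp
    then have "H (a, k, r)" using std[of "nat q"] by simp
    then show ?thesis using Hw by simp
  next
    case False
    then have a1: "a \<ge> 1" using iv by simp
    show ?thesis
    proof (rule ccontr)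
      assume "\<not> holds (FM m) Pm (\<rho>(x := w)) \<phi>"
      then have nH: "\<not> H (a, k, r)" using Hw by simp
      have down: "\<not> H (a, k - int j * int m, r)" for j
      proof (induction j)
        case 0 then show ?case using nH by simp
      next
        case (Suc j)
        show ?case
        proof
          assume h: "H (a, k - int (Suc j) * int m, r)"
          have "minv m (a, k - int (Suc j) * int m, r)" using iv a1 by simp
          then have "H (msuc m (a, k - int (Suc j) * int m, r))" using stepH h by blast
          then have "H (a, k - int j * int m, r)" by (simp add: algebra_simps)
          then show False using Suc by simp
        qed
      qed
      let ?v0 = "(a, k - int (Suc K) * int m, r)"
      have i0: "minv m ?v0" using iv a1 by simp
      have l0: "large N ?v0" using a1 by simp
      have "{0..Suc K} \<subseteq> Exc m \<rho> x \<phi> V ?v0"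
      proof
        fix j assume "j \<in> {0..Suc K}"
        then have j: "j \<le> Suc K" by simp
        have eqs: "shift m ?v0 j = (a, k - int (Suc K - j) * int m, r)"
          using j by (simp add: algebra_simps of_nat_diff)
        have "\<not> H (shift m ?v0 j)" unfolding eqs by (rule down)
        then show "j \<in> Exc m \<rho> x \<phi> V ?v0" using V unfolding Exc_def H_def by simp
      qed
      then have "card {0..Suc K} \<le> card (Exc m \<rho> x \<phi> V ?v0)"
        by (intro card_mono) (use NVK[OF i0 l0] in auto)
      then show False using NVK[OF i0 l0] by simp
    qed
  qed
qed

lemma ind_holds:
  assumes q: "qfree \<phi>" and g: "\<And>z. z \<in> fv \<phi> - {x} \<Longrightarrow> tvars (\<sigma> z) = {}"
  shows "holds (FM m) Pm \<rho> (ind_fm x \<phi> \<sigma>)"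
proof -
  define \<rho>1 where "\<rho>1 y = teval (FM m) \<rho> (\<sigma> y)" for y
  have a: "holds (FM m) Pm \<rho> (fsubst (\<sigma>(x := zero)) \<phi>) = holds (FM m) Pm (\<rho>1(x := dec m mzero)) \<phi>"
  proof -
    have "(\<lambda>y. teval (FM m) \<rho> ((\<sigma>(x := zero)) y)) = \<rho>1(x := dec m mzero)"
      by (rule ext) (simp add: \<rho>1_def teval_zero)
    then show ?thesis by (simp only: holds_fsubst)
  qed
  have b: "holds (FM m) Pm (\<rho>(x := v)) (fsubst (\<sigma>(x := Var x)) \<phi>) = holds (FM m) Pm (\<rho>1(x := v)) \<phi>" for v
  proof -
    have "holds (FM m) Pm (\<lambda>y. teval (FM m) (\<rho>(x := v)) ((\<sigma>(x := Var x)) y)) \<phi> = holds (FM m) Pm (\<rho>1(x := v)) \<phi>"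
    proof (rule holds_cong)
      fix y assume y: "y \<in> fv \<phi>"
      show "teval (FM m) (\<rho>(x := v)) ((\<sigma>(x := Var x)) y) = (\<rho>1(x := v)) y"
      proof (cases "y = x")
        case False
        then have "tvars (\<sigma> y) = {}" using g y by simp
        then show ?thesis using False unfolding \<rho>1_def by (simp add: teval_ground[of "\<sigma> y" _ "\<rho>(x := v)" \<rho>])
      qed simp
    qed
    then show ?thesis by (simp only: holds_fsubst)
  qed
  have c: "holds (FM m) Pm (\<rho>(x := v)) (fsubst (\<sigma>(x := suc (Var x))) \<phi>) = holds (FM m) Pm (\<rho>1(x := dec m (msuc m (enc m v)))) \<phi>" for v
  proof -
    have "holds (FM m) Pm (\<lambda>y. teval (FM m) (\<rho>(x := v)) ((\<sigma>(x := suc (Var x))) y)) \<phi> = holds (FM m) Pm (\<rho>1(x := dec m (msuc m (enc m v)))) \<phi>"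
    proof (rule holds_cong)
      fix y assume y: "y \<in> fv \<phi>"
      show "teval (FM m) (\<rho>(x := v)) ((\<sigma>(x := suc (Var x))) y) = (\<rho>1(x := dec m (msuc m (enc m v)))) y"
      proof (cases "y = x")
        case False
        then have "tvars (\<sigma> y) = {}" using g y by simp
        then show ?thesis using False unfolding \<rho>1_def by (simp add: teval_ground[of "\<sigma> y" _ "\<rho>(x := v)" \<rho>])
      qed (simp add: teval_suc)
    qed
    then show ?thesis by (simp only: holds_fsubst)
  qed
  show ?thesis
    unfolding ind_fm_def holds.simps a b c
  proof (intro impI allI)
    fix v
    assume h: "holds (FM m) Pm (\<rho>1(x := dec m mzero)) \<phi> \<and>
      (\<forall>v. holds (FM m) Pm (\<rho>1(x := v)) \<phi> \<longrightarrow> holds (FM m) Pm (\<rho>1(x := dec m (msuc m (enc m v)))) \<phi>)"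
    show "holds (FM m) Pm (\<rho>1(x := v)) \<phi>"
      by (rule open_ind[OF q]) (use h in auto)
  qed
qed

end

lemma tvars_mul: "tvars (mul j t) = (if j = 0 then {} else tvars t)"
  by (induction j t rule: mul.induct) (auto simp: zero_def plus_def)

lemma tvars_sucs: "tvars (sucs n t) = tvars t"
  by (induction n) (auto simp: sucs_def suc_def)

lemma svars_Var: "svars Var S = S"
  by (auto simp: svars_def)

lemma T'_closed: "A \<in> T'_axioms \<Longrightarrow> closedsk True Var A"
  unfolding T'_axioms_def T_axioms_def by auto

lemma C_closed: "closedsk True Var (Neg (C_fm m))"
  by (simp del: fsubst.simps add: C_fm_def fv_fsubst svars_def skt_def tvars_mul closedsk_qfree finite_fv) auto

lemma D_closed: "closedsk True Var (Neg (D_fm m n))"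
  by (simp del: fsubst.simps add: D_fm_def fv_fsubst svars_def skt_def tvars_mul tvars_sucs closedsk_qfree finite_fv)

lemma ind_closed:
  assumes q: "qfree \<phi>" and g: "\<And>z. z \<in> fv \<phi> - {x} \<Longrightarrow> tvars (\<sigma> z) = {}"
  shows "closedsk True Var (ind_fm x \<phi> \<sigma>)"
proof -
  have f1: "fv (fsubst (\<sigma>(x := Var x)) \<phi>) \<subseteq> {x}"
    using g by (auto simp: fv_fsubst svars_def split: if_splits)
  have f2: "fv (fsubst (\<sigma>(x := suc (Var x))) \<phi>) \<subseteq> {x}"
    using g by (auto simp: fv_fsubst svars_def suc_def split: if_splits)
  let ?Q = "All x (Imp (fsubst (\<sigma>(x := Var x)) \<phi>) (fsubst (\<sigma>(x := suc (Var x))) \<phi>))"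
  have "fv (fsubst Var ?Q) = fv ?Q" by (simp only: fv_fsubst svars_Var)
  also have "\<dots> = {}" using f1 f2 by auto
  finally have fQ: "fv (fsubst Var ?Q) = {}" .
  show ?thesis unfolding ind_fm_def
    using fQ q by (simp del: fsubst.simps add: closedsk_qfree qfree_fsubst)
qed

lemma clauses_sound:
  assumes "closedsk True Var A" "\<And>\<rho>. holds (FM m) Pm \<rho> A" "c \<in> CNF (skE A)"
  shows "csat UNIV (FM m) Pm c"
proof (rule CNF_sound[OF _ assms(3)])
  fix \<rho>
  have "holds (hull (Fb m) Pm) Pm (\<lambda>y. teval (hull (Fb m) Pm) \<rho> (Var y)) A = True"
    using assms(2)[of \<rho>] by (simp add: FM_def)
  then have "ev (hull (Fb m) Pm) Pm True \<rho> (sk True Var A)"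
    by (rule sk_sound[OF assms(1)])
  then show "ev (FM m) Pm True \<rho> (skE A)" by (simp add: FM_def skE_def)
qed

lemma init_sound:
  assumes "2 \<le> m" "\<C> = X m \<or> \<C> = Y m n" "c \<in> \<C>"
  shows "csat UNIV (FM m) Pm c"
proof -
  have m: "0 < m" using assms(1) by simp
  obtain A where A: "A \<in> T'_axioms \<or> A = Neg (C_fm m) \<or> A = Neg (D_fm m n)" "c \<in> CNF (skE A)"
    using assms(2,3) unfolding X_def Y_def CNFsk_def by blast
  show ?thesis
  proof (rule clauses_sound[OF _ _ A(2)])
    show "closedsk True Var A" using A(1) T'_closed C_closed D_closed by blast
    show "holds (FM m) Pm \<rho> A" for \<rho>
      using A(1) T'_holds[OF m] negC_holds[OF m assms(1)] negD_holds[OF m] by blast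
  qed
qed

theorem theorem4:
  fixes \<S> :: "rule set" and m n :: nat and \<C> :: "clause set"
  assumes "saturation_system \<S>"
    and "sound \<S>"
    and "0 < n" and "n < m"
    and "\<C> = X m \<or> \<C> = Y m n"
  shows "\<not> refutes (\<S> \<union> IND_PF (Open (L \<C>))) \<C>"
proof
  assume "refutes (\<S> \<union> IND_PF (Open (L \<C>))) \<C>"
  then obtain Ds where D: "deduction (\<S> \<union> IND_PF (Open (L \<C>))) \<C> Ds" and e: "{||} \<in> last Ds"
    unfolding refutes_def derivable_def by blast
  have m2: "2 \<le> m" using assms(3,4) by simp
  have m: "0 < m" using m2 by simp
  have all: "\<forall>c \<in> Ds ! i. csat UNIV (FM m) Pm c" if "i < length Ds" for i
    using that
  proof (induction i)
    case 0
    have "Ds ! 0 = \<C>" using D unfolding deduction_def by (metis hd_conv_nth)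
    then show ?case using init_sound[OF m2 assms(5)] by simp
  next
    case (Suc i)
    obtain B where B: "(Ds ! i, B) \<in> \<S> \<union> IND_PF (Open (L \<C>))" "Ds ! Suc i = Ds ! i \<union> B"
      using D Suc.prems unfolding deduction_def by blast
    have IH: "\<forall>c \<in> Ds ! i. csat UNIV (FM m) Pm c" using Suc by simp
    have "csat UNIV (FM m) Pm c" if c: "c \<in> B" for c
    proof (cases "(Ds ! i, B) \<in> \<S>")
      case True
      have "deduction \<S> (Ds ! i) [Ds ! i, Ds ! i \<union> B]"
        unfolding deduction_def using True by (auto simp: nth_Cons split: nat.splits)
      then have "derivable \<S> (Ds ! i) c" unfolding derivable_def using c by force
      then have "entails (Ds ! i) c" using assms(2) unfolding sound_def by blast
      moreover have "is_struct UNIV (FM m)" by (simp add: is_struct_def)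
      ultimately show ?thesis using IH unfolding entails_def by blast
    next
      case False
      then have "(Ds ! i, B) \<in> IND_PF (Open (L \<C>))" using B(1) by blast
      then obtain x \<phi> \<sigma> where h: "B = CNF (skE (ind_fm x \<phi> \<sigma>))" "\<phi> \<in> Open (L \<C>)"
          "\<forall>z\<in>fv \<phi> - {x}. ground_term_of (L (Ds ! i)) (\<sigma> z)"
        unfolding IND_PF_def by blast
      have q: "qfree \<phi>" using h(2) unfolding Open_def by simp
      have g: "\<And>z. z \<in> fv \<phi> - {x} \<Longrightarrow> tvars (\<sigma> z) = {}"
        using h(3) unfolding ground_term_of_def by blast
      have cc: "c \<in> CNF (skE (ind_fm x \<phi> \<sigma>))" using h(1) c by simp
      show ?thesis
        by (rule clauses_sound[OF ind_closed[OF q g] ind_holds[OF m q g] cc])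
    qed
    then show ?case using IH B(2) by auto
  qed
  have "length Ds > 0" using D unfolding deduction_def by simp
  then have "csat UNIV (FM m) Pm {||}" using all[of "length Ds - 1"] e by (simp add: last_conv_nth)
  then show False unfolding csat_def by simp
qed


end
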